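(* Let $X$ be a locally convex space, let $T:X\rightrightarrows X^{*}$, and let $\mathcal{V}$ be a class of algebraically open subsets of $X$ with $X\in\mathcal{V}$. Then $T\in\mathcal{M}(X)$ and $T$ is identified by every $V\in\mathcal{V}$ if and only if $T$ is representable and $T$ is $V$-NI for every $V\in\mathcal{V}$.
   Context: $(X,\tau)$ is a non-trivial Hausdorff locally convex space, $X^*$ its dual with weak-star topology $\omega^*$, $Z=X\times X^*$ with topology $\tau\times\omega^*$, $c(x,x^* )=\langle x,x^*\rangle$. Operators are identified with their graphs; $D(T)$ is the domain; $T|_V$ has graph $\operatorname{Graph}T\cap(V\times X^* )$. $\varphi_{T}(x,x^{*})=\sup\{\langle x,u^{*}\rangle+\langle u,x^{*}\rangle-\langle u,u^{*}\rangle\mid(u,u^{*})\in T\}$ ($\sup\emptyset=-\infty$). $\mathcal M(X)$: monotone operators with non-empty graph. $T$ is representable if there is a proper convex $\tau\times\omega^*$-lsc $h:Z\to\overline{\mathbb R}$ with $h\ge c$ and $\{h=c\}=\operatorname{Graph}T$. $V$ identifies $T$ if $\{z\in V\times X^*\mid\varphi_{T|_V}(z)\le c(z)\}\subset\operatorname{Graph}T$; $T$ is $V$-NI if $\varphi_{T|_V}\ge c$ on $V\times X^*$. Algebraically open: equal to its core. *)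

theory Defs
  imports "HOL-Analysis.Analysis"
begin

definition hlcs :: "'a::real_vector topology \<Rightarrow> bool" where
  "hlcs \<tau> \<longleftrightarrow>
     topspace \<tau> = UNIV \<and>
     continuous_map (prod_topology \<tau> \<tau>) \<tau> (\<lambda>(x, y). x + y) \<and>
     continuous_map (prod_topology euclideanreal \<tau>) \<tau> (\<lambda>(a, x). a *\<^sub>R x) \<and>
     Hausdorff_space \<tau> \<and>
     (\<forall>U. openin \<tau> U \<and> 0 \<in> U \<longrightarrow> (\<exists>W. openin \<tau> W \<and> convex W \<and> 0 \<in> W \<and> W \<subseteq> U)) \<and>
     (\<exists>x::'a. x \<noteq> 0)"

definition dual :: "'a::real_vector topology \<Rightarrow> ('a \<Rightarrow> real) set" where
  "dual \<tau> = {f. linear f \<and> continuous_map \<tau> euclideanreal f}"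

definition weak_star :: "'a::real_vector topology \<Rightarrow> ('a \<Rightarrow> real) topology" where
  "weak_star \<tau> = subtopology (product_topology (\<lambda>_. euclideanreal) UNIV) (dual \<tau>)"

definition Ztop :: "'a::real_vector topology \<Rightarrow> ('a \<times> ('a \<Rightarrow> real)) topology" where
  "Ztop \<tau> = prod_topology \<tau> (weak_star \<tau>)"

definition Zset :: "'a::real_vector topology \<Rightarrow> ('a \<times> ('a \<Rightarrow> real)) set" where
  "Zset \<tau> = UNIV \<times> dual \<tau>"

definition cpl :: "'a \<times> ('a \<Rightarrow> real) \<Rightarrow> real" where
  "cpl z = snd z (fst z)"

definition zcomb :: "real \<Rightarrow> 'a::real_vector \<times> ('a \<Rightarrow> real) \<Rightarrow> 'a \<times> ('a \<Rightarrow> real) \<Rightarrow> 'a \<times> ('a \<Rightarrow> real)" where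
  "zcomb t z w = (t *\<^sub>R fst z + (1 - t) *\<^sub>R fst w, \<lambda>y. t * snd z y + (1 - t) * snd w y)"

text \<open>Convexity of an extended-real function on Z (convexity of its epigraph).\<close>
definition convex_Z :: "'a::real_vector topology \<Rightarrow> ('a \<times> ('a \<Rightarrow> real) \<Rightarrow> ereal) \<Rightarrow> bool" where
  "convex_Z \<tau> h \<longleftrightarrow>
     (\<forall>z\<in>Zset \<tau>. \<forall>w\<in>Zset \<tau>. \<forall>r s t. h z \<le> ereal r \<and> h w \<le> ereal s \<and> 0 \<le> t \<and> t \<le> 1
        \<longrightarrow> h (zcomb t z w) \<le> ereal (t * r + (1 - t) * s))"

definition proper_Z :: "'a::real_vector topology \<Rightarrow> ('a \<times> ('a \<Rightarrow> real) \<Rightarrow> ereal) \<Rightarrow> bool" where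
  "proper_Z \<tau> h \<longleftrightarrow> (\<forall>z\<in>Zset \<tau>. h z \<noteq> -\<infinity>) \<and> (\<exists>z\<in>Zset \<tau>. h z \<noteq> \<infinity>)"

definition lsc_Z :: "'a::real_vector topology \<Rightarrow> ('a \<times> ('a \<Rightarrow> real) \<Rightarrow> ereal) \<Rightarrow> bool" where
  "lsc_Z \<tau> h \<longleftrightarrow> (\<forall>r::real. closedin (Ztop \<tau>) {z \<in> topspace (Ztop \<tau>). h z \<le> ereal r})"

text \<open>Operators T : X => X* identified with their graphs.\<close>
definition monotone_op :: "('a::real_vector \<times> ('a \<Rightarrow> real)) set \<Rightarrow> bool" where
  "monotone_op T \<longleftrightarrow> (\<forall>(x, f)\<in>T. \<forall>(y, g)\<in>T. 0 \<le> f (x - y) - g (x - y))"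

definition M_ops :: "'a::real_vector topology \<Rightarrow> ('a \<times> ('a \<Rightarrow> real)) set set" where
  "M_ops \<tau> = {T. T \<subseteq> Zset \<tau> \<and> monotone_op T \<and> T \<noteq> {}}"

text \<open>Fitzpatrick function; Sup of the empty set is -infinity.\<close>
definition fitz :: "('a \<times> ('a \<Rightarrow> real)) set \<Rightarrow> 'a \<times> ('a \<Rightarrow> real) \<Rightarrow> ereal" where
  "fitz T z = (SUP p\<in>T. ereal (snd p (fst z) + snd z (fst p) - snd p (fst p)))"

definition restr :: "('a \<times> ('a \<Rightarrow> real)) set \<Rightarrow> 'a set \<Rightarrow> ('a \<times> ('a \<Rightarrow> real)) set" where
  "restr T V = T \<inter> (V \<times> UNIV)"

definition representable :: "'a::real_vector topology \<Rightarrow> ('a \<times> ('a \<Rightarrow> real)) set \<Rightarrow> bool" where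
  "representable \<tau> T \<longleftrightarrow>
     (\<exists>h. proper_Z \<tau> h \<and> convex_Z \<tau> h \<and> lsc_Z \<tau> h \<and>
          (\<forall>z\<in>Zset \<tau>. ereal (cpl z) \<le> h z) \<and>
          {z \<in> Zset \<tau>. h z = ereal (cpl z)} = T)"

definition identifies :: "'a::real_vector topology \<Rightarrow> 'a set \<Rightarrow> ('a \<times> ('a \<Rightarrow> real)) set \<Rightarrow> bool" where
  "identifies \<tau> V T \<longleftrightarrow> {z \<in> V \<times> dual \<tau>. fitz (restr T V) z \<le> ereal (cpl z)} \<subseteq> T"

definition V_NI :: "'a::real_vector topology \<Rightarrow> 'a set \<Rightarrow> ('a \<times> ('a \<Rightarrow> real)) set \<Rightarrow> bool" where
  "V_NI \<tau> V T \<longleftrightarrow> (\<forall>z \<in> V \<times> dual \<tau>. ereal (cpl z) \<le> fitz (restr T V) z)"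

definition core :: "'a::real_vector set \<Rightarrow> 'a set" where
  "core V = {x \<in> V. \<forall>y. \<exists>e>0. \<forall>t. 0 \<le> t \<and> t \<le> e \<longrightarrow> x + t *\<^sub>R y \<in> V}"

definition alg_open :: "'a::real_vector set \<Rightarrow> bool" where
  "alg_open V \<longleftrightarrow> core V = V"

end

theory Submission
  imports Defs "HOL-Analysis.Finite_Function_Topology"
begin


definition sublin :: "('v::real_vector \<Rightarrow> real) \<Rightarrow> bool" where
 "sublin p \<longleftrightarrow> (\<forall>x y. p (x + y) \<le> p x + p y) \<and> (\<forall>t x. 0 < t \<longrightarrow> p (t *\<^sub>R x) = t * p x)"

definition lingraph :: "('v::real_vector \<Rightarrow> real) \<Rightarrow> 'v \<Rightarrow> ('v \<times> real) set set" where
 "lingraph p u0 = {G. (0,0) \<in> G \<and> (\<forall>x a y b. (x,a)\<in>G \<longrightarrow> (y,b)\<in>G \<longrightarrow> (x+y,a+b)\<in>G)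
    \<and> (\<forall>x a c. (x,a)\<in>G \<longrightarrow> (c *\<^sub>R x, c * a) \<in> G)
    \<and> (\<forall>x a b. (x,a)\<in>G \<longrightarrow> (x,b)\<in>G \<longrightarrow> a = b)
    \<and> (\<forall>x a. (x,a)\<in>G \<longrightarrow> a \<le> p x) \<and> (u0,1) \<in> G}"

lemma sublin_zero: assumes "sublin p" shows "p 0 = 0"
proof -
  have two: "0 < (2::real)" by simp
  have "p ((2::real) *\<^sub>R 0) = 2 * p 0" using assms two unfolding sublin_def by blast
  thus ?thesis by simp
qed

lemma HB_step:
  assumes sp: "sublin p" and G: "G \<in> lingraph p u0" and x1: "\<forall>a. (x1,a) \<notin> G"
  shows "\<exists>G'\<in>lingraph p u0. G \<subseteq> G' \<and> G' \<noteq> G"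
proof -
  have G0: "(0,0) \<in> G" and Gadd: "\<And>x a y b. (x,a)\<in>G \<Longrightarrow> (y,b)\<in>G \<Longrightarrow> (x+y,a+b)\<in>G"
    and Gsc: "\<And>x a c. (x,a)\<in>G \<Longrightarrow> (c *\<^sub>R x, c * a) \<in> G"
    and Gfun: "\<And>x a b. (x,a)\<in>G \<Longrightarrow> (x,b)\<in>G \<Longrightarrow> a = b"
    and Gdom: "\<And>x a. (x,a)\<in>G \<Longrightarrow> a \<le> p x" and Gu: "(u0,1) \<in> G"
    using G unfolding lingraph_def by blast+
  have padd: "\<And>x y. p (x + y) \<le> p x + p y" and psc: "\<And>t x. 0 < t \<Longrightarrow> p (t *\<^sub>R x) = t * p x"
    using sp unfolding sublin_def by blast+
  define L where "L = {a - p (s - x1) | s a. (s,a) \<in> G}"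
  have key: "a - p (s - x1) \<le> p (s' + x1) - a'" if "(s,a)\<in>G" "(s',a')\<in>G" for s a s' a'
  proof -
    have "a + a' \<le> p (s + s')" using Gdom[OF Gadd[OF that]] .
    also have "\<dots> = p ((s - x1) + (s' + x1))" by (simp add: algebra_simps)
    also have "\<dots> \<le> p (s - x1) + p (s' + x1)" by (rule padd)
    finally show ?thesis by simp
  qed
  have Lne: "L \<noteq> {}" using G0 unfolding L_def by blast
  have Lbdd: "bdd_above L" unfolding L_def bdd_above_def
    using key[OF _ G0] by fastforce
  define c where "c = Sup L"
  have c_ge: "a - p (s - x1) \<le> c" if "(s,a)\<in>G" for s a
    unfolding c_def by (rule cSup_upper) (use that Lbdd in \<open>auto simp: L_def\<close>)
  have c_le: "c \<le> p (s' + x1) - a'" if "(s',a')\<in>G" for s' a'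
    unfolding c_def by (rule cSup_least[OF Lne]) (use that key in \<open>auto simp: L_def\<close>)
  define G' where "G' = {(s + t *\<^sub>R x1, a + t * c) | s a t. (s,a) \<in> G}"
  have sub: "G \<subseteq> G'"
  proof
    fix z assume "z \<in> G"
    then show "z \<in> G'" unfolding G'_def by (cases z) (rule CollectI, rule exI[of _ "fst z"], rule exI[of _ "snd z"], rule exI[of _ 0], auto)
  qed
  have x1G': "(x1, c) \<in> G'" unfolding G'_def using G0 by force
  have neq: "G' \<noteq> G" using x1G' x1 by blast
  have "G' \<in> lingraph p u0"
    unfolding lingraph_def
  proof (intro CollectI conjI allI impI)
    show "(0,0) \<in> G'" using sub G0 by blast
    show "(u0,1) \<in> G'" using sub Gu by blast
  next
    fix x a y b assume "(x,a)\<in>G'" "(y,b)\<in>G'"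
    then obtain s1 a1 t1 s2 a2 t2 where h: "(s1,a1)\<in>G" "(s2,a2)\<in>G" "x = s1 + t1 *\<^sub>R x1" "a = a1 + t1 * c"
       "y = s2 + t2 *\<^sub>R x1" "b = a2 + t2 * c" unfolding G'_def by blast
    have "(x+y, a+b) = ((s1+s2) + (t1+t2) *\<^sub>R x1, (a1+a2) + (t1+t2)*c)"
      using h by (simp add: algebra_simps scaleR_add_left)
    then show "(x+y,a+b)\<in>G'" unfolding G'_def using Gadd[OF h(1,2)] by blast
  next
    fix x a r assume "(x,a)\<in>G'"
    then obtain s1 a1 t1 where h: "(s1,a1)\<in>G" "x = s1 + t1 *\<^sub>R x1" "a = a1 + t1 * c"
      unfolding G'_def by blast
    have "(r *\<^sub>R x, r * a) = (r *\<^sub>R s1 + (r*t1) *\<^sub>R x1, r * a1 + (r*t1)*c)"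
      using h by (simp add: algebra_simps)
    then show "(r *\<^sub>R x, r * a)\<in>G'" unfolding G'_def using Gsc[OF h(1)] by blast
  next
    fix x a b assume "(x,a)\<in>G'" "(x,b)\<in>G'"
    then obtain s1 a1 t1 s2 a2 t2 where h: "(s1,a1)\<in>G" "(s2,a2)\<in>G" "x = s1 + t1 *\<^sub>R x1" "a = a1 + t1 * c"
       "x = s2 + t2 *\<^sub>R x1" "b = a2 + t2 * c" unfolding G'_def by blast
    have t: "t1 = t2"
    proof (rule ccontr)
      assume ne: "t1 \<noteq> t2"
      have "(s2 - s1, a2 - a1) \<in> G" using Gadd[OF h(2) Gsc[OF h(1), of "-1"]] by simp
      then have "((1/(t1-t2)) *\<^sub>R (s2 - s1), (1/(t1-t2)) * (a2 - a1)) \<in> G" by (rule Gsc)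
      moreover have "(1/(t1-t2)) *\<^sub>R (s2 - s1) = x1"
      proof -
        have "s2 - s1 = (t1 - t2) *\<^sub>R x1" using h(3,5) by (simp add: algebra_simps scaleR_diff_left)
        then show ?thesis using ne by simp
      qed
      ultimately show False using x1 by metis
    qed
    then have "s1 = s2" using h(3,5) by simp
    then have "a1 = a2" using Gfun h(1,2) by blast
    then show "a = b" using h t by simp
  next
    fix x a assume "(x,a)\<in>G'"
    then obtain s1 a1 t where h: "(s1,a1)\<in>G" "x = s1 + t *\<^sub>R x1" "a = a1 + t * c"
      unfolding G'_def by blast
    consider "t = 0" | "t > 0" | "t < 0" by linarith
    then show "a \<le> p x"
    proof cases
      case 1 then show ?thesis using h Gdom by simp
    next
      case 2
      have "((1/t) *\<^sub>R s1, (1/t) * a1) \<in> G" using Gsc[OF h(1)] .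
      from c_le[OF this] have "c \<le> p ((1/t) *\<^sub>R s1 + x1) - (1/t) * a1" .
      then have "t * c \<le> t * (p ((1/t) *\<^sub>R s1 + x1) - (1/t) * a1)" using 2
        by (simp add: mult_left_mono)
      also have "\<dots> = t * p ((1/t) *\<^sub>R s1 + x1) - a1" using 2 by (simp add: right_diff_distrib)
      finally have A: "t * c \<le> t * p ((1/t) *\<^sub>R s1 + x1) - a1" .
      have B: "t * p ((1/t) *\<^sub>R s1 + x1) = p (t *\<^sub>R ((1/t) *\<^sub>R s1 + x1))" by (rule psc[OF 2, symmetric])
      have C: "t *\<^sub>R ((1/t) *\<^sub>R s1 + x1) = s1 + t *\<^sub>R x1" using 2 by (simp add: scaleR_add_right)
      show ?thesis using h A B C by simp
    next
      case 3
      define u where "u = - t"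
      have u: "u > 0" using 3 u_def by simp
      have "((1/u) *\<^sub>R s1, (1/u) * a1) \<in> G" using Gsc[OF h(1)] .
      from c_ge[OF this] have "(1/u) * a1 - p ((1/u) *\<^sub>R s1 - x1) \<le> c" .
      then have "u * ((1/u) * a1 - p ((1/u) *\<^sub>R s1 - x1)) \<le> u * c" using u
        by (simp add: mult_left_mono)
      also have "u * ((1/u) * a1 - p ((1/u) *\<^sub>R s1 - x1)) = a1 - u * p ((1/u) *\<^sub>R s1 - x1)"
        using u by (simp add: right_diff_distrib)
      finally have A: "a1 - u * p ((1/u) *\<^sub>R s1 - x1) \<le> u * c" .
      have B: "u * p ((1/u) *\<^sub>R s1 - x1) = p (u *\<^sub>R ((1/u) *\<^sub>R s1 - x1))" by (rule psc[OF u, symmetric])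
      have C: "u *\<^sub>R ((1/u) *\<^sub>R s1 - x1) = s1 + t *\<^sub>R x1" using u by (simp add: u_def scaleR_diff_right)
      show ?thesis using h A B C u_def by simp
    qed
  qed
  then show ?thesis using sub neq by blast
qed

lemma lingraph_Union:
  assumes C: "C \<in> chains (lingraph p u0)" and ne: "C \<noteq> {}"
  shows "\<Union>C \<in> lingraph p u0"
proof -
  have sub: "C \<subseteq> lingraph p u0" and ch: "\<And>A B. A \<in> C \<Longrightarrow> B \<in> C \<Longrightarrow> A \<subseteq> B \<or> B \<subseteq> A"
    using C unfolding chains_def chain_subset_def by blast+
  have two: "\<exists>X\<in>C. A \<subseteq> X \<and> B \<subseteq> X" if "A \<in> C" "B \<in> C" for A B
    using ch[OF that] that by blast
  show ?thesis unfolding lingraph_def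
  proof (intro CollectI conjI allI impI)
    obtain X where X: "X \<in> C" using ne by blast
    then show "(0,0) \<in> \<Union>C" "(u0,1) \<in> \<Union>C" using sub unfolding lingraph_def by blast+
  next
    fix x a y b assume "(x,a) \<in> \<Union>C" "(y,b) \<in> \<Union>C"
    then obtain A B where "A\<in>C" "B\<in>C" "(x,a)\<in>A" "(y,b)\<in>B" by blast
    then obtain X where "X\<in>C" "(x,a)\<in>X" "(y,b)\<in>X" using two by blast
    then show "(x+y,a+b) \<in> \<Union>C" using sub unfolding lingraph_def by blast
  next
    fix x a c assume "(x,a) \<in> \<Union>C"
    then obtain X where "X\<in>C" "(x,a)\<in>X" by blast
    then show "(c *\<^sub>R x, c * a) \<in> \<Union>C" using sub unfolding lingraph_def by blast
  next
    fix x a b assume "(x,a) \<in> \<Union>C" "(x,b) \<in> \<Union>C"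
    then obtain A B where "A\<in>C" "B\<in>C" "(x,a)\<in>A" "(x,b)\<in>B" by blast
    then obtain X where "X\<in>C" "(x,a)\<in>X" "(x,b)\<in>X" using two by blast
    then show "a = b" using sub unfolding lingraph_def by blast
  next
    fix x a assume "(x,a) \<in> \<Union>C"
    then obtain X where "X\<in>C" "(x,a)\<in>X" by blast
    then show "a \<le> p x" using sub unfolding lingraph_def by blast
  qed
qed

lemma HB:
  fixes p :: "'v::real_vector \<Rightarrow> real"
  assumes sp: "sublin p" and pnn: "\<And>x. 0 \<le> p x" and pu: "1 \<le> p u0"
  shows "\<exists>F. linear F \<and> (\<forall>x. F x \<le> p x) \<and> F u0 = 1"
proof -
  have psc: "\<And>t x. 0 < t \<Longrightarrow> p (t *\<^sub>R x) = t * p x"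
    using sp unfolding sublin_def by blast
  have u0: "u0 \<noteq> 0" using pu sublin_zero[OF sp] by auto
  define G0 where "G0 = {(t *\<^sub>R u0, t) | t. True}"
  have G0: "G0 \<in> lingraph p u0"
    unfolding lingraph_def
  proof (intro CollectI conjI allI impI)
    show "(0,0) \<in> G0" unfolding G0_def by (rule CollectI, rule exI[of _ 0]) simp
    show "(u0,1) \<in> G0" unfolding G0_def by (rule CollectI, rule exI[of _ 1]) simp
  next
    fix x a y b assume "(x,a) \<in> G0" "(y,b) \<in> G0"
    then show "(x+y,a+b) \<in> G0" unfolding G0_def by (auto simp: scaleR_add_left)
  next
    fix x a c assume "(x,a) \<in> G0"
    then show "(c *\<^sub>R x, c * a) \<in> G0" unfolding G0_def by auto
  next
    fix x a b assume "(x,a) \<in> G0" "(x,b) \<in> G0"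
    then show "a = b" unfolding G0_def using u0 by (auto simp: scaleR_cancel_right)
  next
    fix x a assume "(x,a) \<in> G0"
    then obtain t where t: "x = t *\<^sub>R u0" "a = t" unfolding G0_def by blast
    show "a \<le> p x"
    proof (cases "t > 0")
      case True
      then have "p x = t * p u0" using t psc by simp
      moreover have "t \<le> t * p u0" using True pu by simp
      ultimately show ?thesis using t by simp
    next
      case False then show ?thesis using t pnn[of x] by simp
    qed
  qed
  have "\<forall>C\<in>chains (lingraph p u0). \<exists>U\<in>lingraph p u0. \<forall>X\<in>C. X \<subseteq> U"
  proof
    fix C assume C: "C \<in> chains (lingraph p u0)"
    show "\<exists>U\<in>lingraph p u0. \<forall>X\<in>C. X \<subseteq> U"
    proof (cases "C = {}")
      case True then show ?thesis using G0 by blast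
    next
      case False then show ?thesis using lingraph_Union[OF C] by blast
    qed
  qed
  from Zorn_Lemma2[OF this] obtain M where M: "M \<in> lingraph p u0"
    and max: "\<And>X. X \<in> lingraph p u0 \<Longrightarrow> M \<subseteq> X \<Longrightarrow> X = M" by blast
  have tot: "\<exists>a. (x,a) \<in> M" for x
  proof (rule ccontr)
    assume "\<nexists>a. (x, a) \<in> M"
    then obtain G' where "G' \<in> lingraph p u0" "M \<subseteq> G'" "G' \<noteq> M"
      using HB_step[OF sp M] by blast
    then show False using max by blast
  qed
  have Madd: "\<And>x a y b. (x,a)\<in>M \<Longrightarrow> (y,b)\<in>M \<Longrightarrow> (x+y,a+b)\<in>M"
    and Msc: "\<And>x a c. (x,a)\<in>M \<Longrightarrow> (c *\<^sub>R x, c * a) \<in> M"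
    and Mfun: "\<And>x a b. (x,a)\<in>M \<Longrightarrow> (x,b)\<in>M \<Longrightarrow> a = b"
    and Mdom: "\<And>x a. (x,a)\<in>M \<Longrightarrow> a \<le> p x" and Mu: "(u0,1) \<in> M"
    using M unfolding lingraph_def by blast+
  define F where "F x = (THE a. (x,a) \<in> M)" for x
  have FM: "(x, F x) \<in> M" for x
    unfolding F_def using tot[of x] Mfun by (metis theI)
  have Fe: "(x,a) \<in> M \<Longrightarrow> F x = a" for x a using FM Mfun by blast
  have "linear F"
  proof (rule linearI)
    fix x y show "F (x + y) = F x + F y" using Fe[OF Madd[OF FM FM]] .
  next
    fix r x show "F (r *\<^sub>R x) = r *\<^sub>R F x" using Fe[OF Msc[OF FM]] by simp
  qed
  moreover have "\<forall>x. F x \<le> p x" using Mdom FM by blast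
  moreover have "F u0 = 1" using Fe[OF Mu] .
  ultimately show ?thesis by blast
qed

definition aopen :: "'v::real_vector set \<Rightarrow> bool" where
  "aopen A \<longleftrightarrow> (\<forall>a\<in>A. \<forall>v. \<exists>e>0. \<forall>t. 0 \<le> t \<and> t \<le> e \<longrightarrow> a + t *\<^sub>R v \<in> A)"

lemma gauge:
  fixes G :: "'v::real_vector set"
  assumes cG: "convex G" and G0: "0 \<in> G" and aG: "aopen G"
  defines "p \<equiv> \<lambda>x. Inf {t. 0 < t \<and> (1/t) *\<^sub>R x \<in> G}"
  shows "sublin p" "\<And>x. 0 \<le> p x" "\<And>g. g \<in> G \<Longrightarrow> p g < 1" "\<And>x. x \<notin> G \<Longrightarrow> 1 \<le> p x"
proof -
  define S where "S x = {t. 0 < t \<and> (1/t) *\<^sub>R x \<in> G}" for x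
  have pS: "p x = Inf (S x)" for x unfolding p_def S_def by simp
  have star: "s *\<^sub>R g \<in> G" if "g \<in> G" "0 \<le> s" "s \<le> 1" for g s
    using convexD[OF cG that(1) G0, of s "1-s"] that by simp
  have Sne: "S x \<noteq> {}" for x
  proof -
    obtain e where e: "e > 0" "\<And>t. 0 \<le> t \<and> t \<le> e \<Longrightarrow> 0 + t *\<^sub>R x \<in> G"
      using aG G0 unfolding aopen_def by blast
    have "1/e \<in> S x" using e(1) e(2)[of e] unfolding S_def by simp
    then show ?thesis by blast
  qed
  have Sbdd: "bdd_below (S x)" for x unfolding S_def bdd_below_def by (rule exI[of _ 0]) auto
  have Spos: "t \<in> S x \<Longrightarrow> 0 < t" for t x unfolding S_def by simp
  have low: "t \<in> S x \<Longrightarrow> p x \<le> t" for t x unfolding pS by (rule cInf_lower[OF _ Sbdd])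
  have great: "(\<And>t. t \<in> S x \<Longrightarrow> b \<le> t) \<Longrightarrow> b \<le> p x" for b x
    unfolding pS by (rule cInf_greatest[OF Sne])
  show pnn: "\<And>x. 0 \<le> p x" using great Spos less_imp_le by metis
  have Sscale: "t \<in> S x \<longleftrightarrow> c * t \<in> S (c *\<^sub>R x)" if c: "c > 0" for c t x
    unfolding S_def using c by (auto simp: zero_less_mult_iff)
  have psc: "p (c *\<^sub>R x) = c * p x" if c: "c > 0" for c x
  proof (rule antisym)
    have "p (c *\<^sub>R x) / c \<le> p x"
    proof (rule great)
      fix t assume "t \<in> S x"
      then have "p (c *\<^sub>R x) \<le> c * t" using Sscale[OF c] low by blast
      then show "p (c *\<^sub>R x) / c \<le> t" using c by (simp add: divide_le_eq mult.commute)
    qed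
    then show "p (c *\<^sub>R x) \<le> c * p x" using c by (simp add: divide_le_eq mult.commute)
  next
    have "p x \<le> p (c *\<^sub>R x) / c"
    proof -
      have "c * p x \<le> p (c *\<^sub>R x)"
      proof (rule great)
        fix s assume s: "s \<in> S (c *\<^sub>R x)"
        have "s / c \<in> S x" using Sscale[OF c, of "s/c" x] s c by simp
        then have "p x \<le> s / c" by (rule low)
        then show "c * p x \<le> s" using c by (simp add: le_divide_eq mult.commute)
      qed
      then show ?thesis using c by (simp add: le_divide_eq mult.commute)
    qed
    then show "c * p x \<le> p (c *\<^sub>R x)" using c by (simp add: le_divide_eq mult.commute)
  qed
  have Sadd: "t + s \<in> S (x + y)" if "t \<in> S x" "s \<in> S y" for t s x y
  proof -
    have t: "t > 0" "(1/t) *\<^sub>R x \<in> G" and s: "s > 0" "(1/s) *\<^sub>R y \<in> G" using that unfolding S_def by auto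
    have "(t/(t+s)) *\<^sub>R ((1/t) *\<^sub>R x) + (s/(t+s)) *\<^sub>R ((1/s) *\<^sub>R y) \<in> G"
      by (rule convexD[OF cG t(2) s(2)]) (use t s in \<open>auto simp: add_divide_distrib[symmetric]\<close>)
    moreover have "(t/(t+s)) *\<^sub>R ((1/t) *\<^sub>R x) + (s/(t+s)) *\<^sub>R ((1/s) *\<^sub>R y) = (1/(t+s)) *\<^sub>R (x + y)"
      using t s by (simp add: scaleR_add_right)
    ultimately show ?thesis using t s unfolding S_def by simp
  qed
  have padd: "p (x + y) \<le> p x + p y" for x y
  proof -
    have "p (x + y) - p x \<le> s" if s: "s \<in> S y" for s
    proof -
      have "p (x + y) - s \<le> p x"
        by (rule great) (use low Sadd s in \<open>fastforce\<close>)
      then show ?thesis by simp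
    qed
    then have "p (x + y) - p x \<le> p y" by (rule great)
    then show ?thesis by simp
  qed
  show "sublin p" unfolding sublin_def using padd psc by blast
  show "\<And>g. g \<in> G \<Longrightarrow> p g < 1"
  proof -
    fix g assume g: "g \<in> G"
    obtain e where e: "e > 0" "\<And>t. 0 \<le> t \<and> t \<le> e \<Longrightarrow> g + t *\<^sub>R g \<in> G"
      using aG g unfolding aopen_def by blast
    have "(1 + e) *\<^sub>R g \<in> G" using e(2)[of e] e(1) by (simp add: scaleR_add_left)
    then have "1/(1+e) \<in> S g" unfolding S_def using e(1) by simp
    then have "p g \<le> 1/(1+e)" by (rule low)
    also have "\<dots> < 1" using e(1) by simp
    finally show "p g < 1" .
  qed
  show "\<And>x. x \<notin> G \<Longrightarrow> 1 \<le> p x"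
  proof -
    fix x assume x: "x \<notin> G"
    show "1 \<le> p x"
    proof (rule great)
      fix t assume t: "t \<in> S x"
      then have t0: "t > 0" "(1/t) *\<^sub>R x \<in> G" unfolding S_def by auto
      show "1 \<le> t"
      proof (rule ccontr)
        assume "\<not> 1 \<le> t"
        then have "t *\<^sub>R ((1/t) *\<^sub>R x) \<in> G" using star[OF t0(2), of t] t0 by simp
        then show False using x t0 by simp
      qed
    qed
  qed
qed

lemma separation:
  fixes A D :: "'v::real_vector set"
  assumes cA: "convex A" and cD: "convex D" and An: "A \<noteq> {}" and Dn: "D \<noteq> {}"
    and disj: "A \<inter> D = {}" and aA: "aopen A"
  shows "\<exists>F::'v\<Rightarrow>real. linear F \<and> (\<forall>a\<in>A. \<forall>d\<in>D. F a < F d) \<and> (\<forall>a\<in>A. \<exists>a'\<in>A. F a < F a')"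
proof -
  obtain a0 d0 where a0: "a0 \<in> A" and d0: "d0 \<in> D" using An Dn by blast
  define c0 where "c0 = a0 - d0"
  define G where "G = {a - d - c0 | a d. a \<in> A \<and> d \<in> D}"
  have cG: "convex G"
  proof (rule convexI)
    fix x y :: 'v and u v :: real assume "x \<in> G" "y \<in> G" "0 \<le> u" "0 \<le> v" "u + v = 1"
    then obtain a d a' d' where h: "a\<in>A" "d\<in>D" "a'\<in>A" "d'\<in>D" "x = a - d - c0" "y = a' - d' - c0"
      and uv: "0 \<le> u" "0 \<le> v" "u + v = 1" unfolding G_def by blast
    have "u *\<^sub>R a + v *\<^sub>R a' \<in> A" using convexD[OF cA h(1,3) uv] .
    moreover have "u *\<^sub>R d + v *\<^sub>R d' \<in> D" using convexD[OF cD h(2,4) uv] .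
    moreover have "u *\<^sub>R x + v *\<^sub>R y = (u *\<^sub>R a + v *\<^sub>R a') - (u *\<^sub>R d + v *\<^sub>R d') - c0"
    proof -
      have "u *\<^sub>R x + v *\<^sub>R y = (u *\<^sub>R a + v *\<^sub>R a') - (u *\<^sub>R d + v *\<^sub>R d') - (u + v) *\<^sub>R c0"
        unfolding h(5,6) by (simp add: scaleR_diff_right scaleR_add_left algebra_simps)
      then show ?thesis using uv by simp
    qed
    ultimately show "u *\<^sub>R x + v *\<^sub>R y \<in> G" unfolding G_def by blast
  qed
  have G0: "0 \<in> G" unfolding G_def c0_def using a0 d0 by force
  have aG: "aopen G" unfolding aopen_def
  proof (intro ballI allI)
    fix g v assume "g \<in> G"
    then obtain a d where h: "a\<in>A" "d\<in>D" "g = a - d - c0" unfolding G_def by blast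
    obtain e where e: "e > 0" "\<And>t. 0 \<le> t \<and> t \<le> e \<Longrightarrow> a + t *\<^sub>R v \<in> A"
      using aA h(1) unfolding aopen_def by blast
    have "g + t *\<^sub>R v \<in> G" if "0 \<le> t \<and> t \<le> e" for t
    proof -
      have "g + t *\<^sub>R v = (a + t *\<^sub>R v) - d - c0" using h by (simp add: algebra_simps)
      then show ?thesis unfolding G_def using e(2)[OF that] h(2) by blast
    qed
    then show "\<exists>e>0. \<forall>t. 0 \<le> t \<and> t \<le> e \<longrightarrow> g + t *\<^sub>R v \<in> G" using e(1) by blast
  qed
  define p where "p = (\<lambda>x. Inf {t. 0 < t \<and> (1/t) *\<^sub>R x \<in> G})"
  have gp: "sublin p" "\<And>x. 0 \<le> p x" "\<And>g. g\<in>G \<Longrightarrow> p g < 1" "\<And>x. x\<notin>G \<Longrightarrow> 1 \<le> p x"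
    using gauge[OF cG G0 aG] unfolding p_def by blast+
  have u0: "- c0 \<notin> G"
  proof
    assume "- c0 \<in> G"
    then obtain a d where "a\<in>A" "d\<in>D" "- c0 = a - d - c0" unfolding G_def by blast
    then show False using disj by (auto simp: algebra_simps)
  qed
  obtain F where F: "linear F" "\<And>x. F x \<le> p x" "F (- c0) = 1"
    using HB[OF gp(1) gp(2) gp(4)[OF u0]] by blast
  have Fc0: "F c0 = -1" using F(3) linear_neg[OF F(1), of c0] by simp
  have sep: "F a < F d" if "a \<in> A" "d \<in> D" for a d
  proof -
    have "a - d - c0 \<in> G" unfolding G_def using that by blast
    then have "F (a - d - c0) < 1" using F(2) gp(3) by (meson le_less_trans)
    moreover have "F (a - d - c0) = F a - F d - F c0" using F(1) by (simp add: linear_diff)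
    ultimately show ?thesis using Fc0 by simp
  qed
  have inc: "\<exists>a'\<in>A. F a < F a'" if a: "a \<in> A" for a
  proof -
    obtain e where e: "e > 0" "\<And>t. 0 \<le> t \<and> t \<le> e \<Longrightarrow> a + t *\<^sub>R (- c0) \<in> A"
      using aA a unfolding aopen_def by blast
    have lin: "\<And>x y. F (x+y) = F x + F y" "\<And>c x. F (c *\<^sub>R x) = c *\<^sub>R F x"
      using F(1) unfolding linear_iff by blast+
    have "F (a + e *\<^sub>R (- c0)) = F a + e" by (simp only: lin F(3)) simp
    moreover have "a + e *\<^sub>R (- c0) \<in> A" using e by simp
    ultimately show ?thesis using e(1) by (metis less_add_same_cancel1)
  qed
  show ?thesis by (rule exI[of _ F]) (use F(1) sep inc in blast)
qed



lemma hlcs_top: "hlcs \<tau> \<Longrightarrow> topspace \<tau> = UNIV" unfolding hlcs_def by blast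

lemma cont_add2:
  assumes "hlcs \<tau>" "continuous_map X \<tau> f" "continuous_map X \<tau> g"
  shows "continuous_map X \<tau> (\<lambda>x. f x + g x)"
proof -
  have "continuous_map (prod_topology \<tau> \<tau>) \<tau> (\<lambda>(x, y). x + y)" using assms(1) unfolding hlcs_def by blast
  from continuous_map_compose[OF continuous_map_pairedI[OF assms(2,3)] this]
  show ?thesis by (simp add: o_def)
qed

lemma cont_scale2:
  assumes "hlcs \<tau>" "continuous_map X euclideanreal f" "continuous_map X \<tau> g"
  shows "continuous_map X \<tau> (\<lambda>x. f x *\<^sub>R g x)"
proof -
  have "continuous_map (prod_topology euclideanreal \<tau>) \<tau> (\<lambda>(a, x). a *\<^sub>R x)" using assms(1) unfolding hlcs_def by blast
  from continuous_map_compose[OF continuous_map_pairedI[OF assms(2,3)] this]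
  show ?thesis by (simp add: o_def)
qed

lemma cont_id: "continuous_map X X (\<lambda>x. x)"
  using continuous_map_id unfolding id_def .

lemma cont_const: "hlcs \<tau> \<Longrightarrow> continuous_map X \<tau> (\<lambda>x. a)"
  by (simp add: hlcs_top)

lemma cont_rconst: "continuous_map X euclideanreal (\<lambda>x. a)"
  by simp

lemma cont_affine:
  assumes "hlcs \<tau>"
  shows "continuous_map \<tau> \<tau> (\<lambda>x. c *\<^sub>R (x + a))"
  by (rule cont_scale2[OF assms cont_rconst cont_add2[OF assms cont_id cont_const[OF assms]]])

lemma cont_line:
  assumes "hlcs \<tau>"
  shows "continuous_map euclideanreal \<tau> (\<lambda>t. a + t *\<^sub>R v)"
  by (rule cont_add2[OF assms cont_const[OF assms] cont_scale2[OF assms cont_id cont_const[OF assms]]])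

lemma open_preimage:
  assumes "continuous_map X \<tau> f" "openin \<tau> U" "topspace X = UNIV"
  shows "openin X {x. f x \<in> U}"
  using openin_continuous_map_preimage[OF assms(1,2)] assms(3) by simp

lemma open_alg:
  assumes h: "hlcs \<tau>" and U: "openin \<tau> U" and a: "a \<in> U"
  shows "\<exists>e>0. \<forall>t. 0 \<le> t \<and> t \<le> e \<longrightarrow> a + t *\<^sub>R v \<in> U"
proof -
  have "openin euclideanreal {t. a + t *\<^sub>R v \<in> U}"
    by (rule open_preimage[OF cont_line[OF h] U]) simp
  then have "open {t. a + t *\<^sub>R v \<in> U}" by (rule open_openin[THEN iffD2])
  moreover have "0 \<in> {t. a + t *\<^sub>R v \<in> U}" using a by simp
  ultimately obtain e where e: "e > 0" "ball 0 e \<subseteq> {t. a + t *\<^sub>R v \<in> U}"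
    using open_contains_ball_eq by metis
  have "\<forall>t. 0 \<le> t \<and> t \<le> e/2 \<longrightarrow> a + t *\<^sub>R v \<in> U"
    using e by (auto simp: subset_iff dist_real_def)
  then show ?thesis using e(1) by (intro exI[of _ "e/2"]) auto
qed

lemma lin_bdd_cont:
  fixes g :: "'a::real_vector \<Rightarrow> real"
  assumes h: "hlcs \<tau>" and g: "linear g" and U: "openin \<tau> U" "0 \<in> U" and M: "\<And>y. y \<in> U \<Longrightarrow> g y \<le> M"
  shows "continuous_map \<tau> euclideanreal g"
proof -
  have lin: "\<And>x y. g (x+y) = g x + g y" "\<And>c x. g (c *\<^sub>R x) = c * g x"
    using g unfolding linear_iff by auto
  define M' where "M' = max M 1"
  have M'0: "M' > 0" unfolding M'_def by simp
  define N where "N = {y. y \<in> U \<and> -y \<in> U}"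
  have Nb: "\<bar>g y\<bar> \<le> M'" if "y \<in> N" for y
  proof -
    have "g y \<le> M" "g (-y) \<le> M" using M that unfolding N_def by auto
    moreover have "g (-y) = - g y" using lin(2)[of "-1" y] by simp
    ultimately show ?thesis unfolding M'_def by linarith
  qed
  have N0: "0 \<in> N" using U(2) unfolding N_def by simp
  have openN: "openin \<tau> N"
  proof -
    have "openin \<tau> {y. (-1) *\<^sub>R (y + 0) \<in> U}" by (rule open_preimage[OF cont_affine[OF h] U(1)]) (simp add: hlcs_top[OF h])
    then have "openin \<tau> ({y. (-1) *\<^sub>R (y + 0) \<in> U} \<inter> U)" using U(1) by blast
    moreover have "{y. (-1) *\<^sub>R (y + 0) \<in> U} \<inter> U = N" unfolding N_def by auto
    ultimately show ?thesis by simp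
  qed
  show ?thesis
    unfolding continuous_map_def
  proof (intro conjI allI impI)
    show "g \<in> topspace \<tau> \<rightarrow> topspace euclideanreal" by (simp add: Pi_def)
  next
    fix S assume S: "openin euclideanreal S"
    show "openin \<tau> {x \<in> topspace \<tau>. g x \<in> S}"
    proof (subst openin_subopen, intro ballI)
      fix x assume x: "x \<in> {x \<in> topspace \<tau>. g x \<in> S}"
      have "open S" using S by (rule open_openin[THEN iffD2])
      moreover have "g x \<in> S" using x by simp
      ultimately obtain d where d: "d > 0" "ball (g x) d \<subseteq> S" using open_contains_ball_eq by metis
      define c where "c = d / (2 * M')"
      have c0: "c > 0" unfolding c_def using d M'0 by simp
      define T where "T = {z. (1/c) *\<^sub>R (z + (-x)) \<in> N}"
      have "openin \<tau> T" unfolding T_def by (rule open_preimage[OF cont_affine[OF h] openN]) (simp add: hlcs_top[OF h])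
      moreover have "x \<in> T" unfolding T_def using N0 by simp
      moreover have "T \<subseteq> {x \<in> topspace \<tau>. g x \<in> S}"
      proof
        fix z assume "z \<in> T"
        then have "\<bar>g ((1/c) *\<^sub>R (z + (-x)))\<bar> \<le> M'" unfolding T_def using Nb by blast
        moreover have "g ((1/c) *\<^sub>R (z + (-x))) = (1/c) * (g z - g x)"
        proof -
          have "g (z + (-x)) = g z - g x" using lin(1)[of z "-x"] lin(2)[of "-1" x] by simp
          then show ?thesis using lin(2) by simp
        qed
        ultimately have "\<bar>g z - g x\<bar> \<le> c * M'" using c0 by (simp add: abs_mult divide_le_eq mult.commute)
        also have "c * M' < d" unfolding c_def using M'0 d by (simp add: field_simps)
        finally have "g z \<in> ball (g x) d" by (simp add: dist_real_def abs_minus_commute)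
        then show "z \<in> {x \<in> topspace \<tau>. g x \<in> S}" using d hlcs_top[OF h] by auto
      qed
      ultimately show "\<exists>T. openin \<tau> T \<and> x \<in> T \<and> T \<subseteq> {x \<in> topspace \<tau>. g x \<in> S}" by blast
    qed
  qed
qed

lemma eval_cont: "continuous_map (weak_star \<tau>) euclideanreal (\<lambda>f. f u)"
  unfolding weak_star_def
  by (rule continuous_map_from_subtopology, rule continuous_map_product_projection[where X="\<lambda>_. euclideanreal", simplified]) simp

lemma weak_nbhd:
  assumes W: "openin (weak_star \<tau>) W" and f0: "f0 \<in> W"
  shows "\<exists>K e. finite K \<and> e > 0 \<and> (\<forall>f\<in>dual \<tau>. (\<Sum>k\<in>K. \<bar>f k - f0 k\<bar>) < e \<longrightarrow> f \<in> W)"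
proof -
  obtain W2 where W2: "openin (product_topology (\<lambda>_. euclideanreal) UNIV) W2" "W = W2 \<inter> dual \<tau>"
    using W unfolding weak_star_def openin_subtopology by blast
  have "f0 \<in> W2" using f0 W2 by blast
  then obtain U where U: "finite {i. U i \<noteq> UNIV}" "\<And>i. openin euclideanreal (U i)"
     "f0 \<in> Pi\<^sub>E UNIV U" "Pi\<^sub>E UNIV U \<subseteq> W2"
    using W2(1) unfolding openin_product_topology_alt by auto
  define K where "K = {i. U i \<noteq> UNIV}"
  have "\<forall>k\<in>K. \<exists>d>0. ball (f0 k) d \<subseteq> U k"
  proof
    fix k assume "k \<in> K"
    have "open (U k)" using U(2)[of k] by (rule open_openin[THEN iffD2])
    moreover have "f0 k \<in> U k" using U(3) by auto
    ultimately show "\<exists>d>0. ball (f0 k) d \<subseteq> U k" using open_contains_ball_eq by metis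
  qed
  then obtain d where d: "\<And>k. k \<in> K \<Longrightarrow> d k > 0 \<and> ball (f0 k) (d k) \<subseteq> U k" by metis
  define e where "e = Min (insert 1 (d ` K))"
  have fin: "finite K" using U(1) K_def by simp
  have e0: "e > 0" unfolding e_def using fin d by auto
  have ed: "e \<le> d k" if "k \<in> K" for k unfolding e_def using fin that by auto
  have "\<forall>f\<in>dual \<tau>. (\<Sum>k\<in>K. \<bar>f k - f0 k\<bar>) < e \<longrightarrow> f \<in> W"
  proof (intro ballI impI)
    fix f assume f: "f \<in> dual \<tau>" "(\<Sum>k\<in>K. \<bar>f k - f0 k\<bar>) < e"
    have "f i \<in> U i" for i
    proof (cases "i \<in> K")
      case True
      have "\<bar>f i - f0 i\<bar> \<le> (\<Sum>k\<in>K. \<bar>f k - f0 k\<bar>)"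
        by (rule member_le_sum) (use True fin in auto)
      then have "\<bar>f i - f0 i\<bar> < d i" using f(2) ed[OF True] by linarith
      then have "f i \<in> ball (f0 i) (d i)" by (simp add: dist_real_def)
      then show ?thesis using d[OF True] by blast
    next
      case False then show ?thesis unfolding K_def by simp
    qed
    then have "f \<in> Pi\<^sub>E UNIV U" by (simp add: PiE_iff)
    then show "f \<in> W" using U(4) W2(2) f(1) by blast
  qed
  then show ?thesis using fin e0 by blast
qed

lemma dual_lin: "f \<in> dual \<tau> \<Longrightarrow> f (x + y) = f x + f y" "f \<in> dual \<tau> \<Longrightarrow> f (c *\<^sub>R x) = c * f x"
  unfolding dual_def linear_iff by auto

lemma dual_lin2: "f \<in> dual \<tau> \<Longrightarrow> f (x - y) = f x - f y" "f \<in> dual \<tau> \<Longrightarrow> f (-x) = - f x" "f \<in> dual \<tau> \<Longrightarrow> f 0 = 0"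
proof -
  assume f: "f \<in> dual \<tau>"
  show "f (-x) = - f x" using dual_lin(2)[OF f, of "-1" x] by simp
  then show "f (x - y) = f x - f y" using dual_lin(1)[OF f, of x "-y"] dual_lin(2)[OF f, of "-1" y] by simp
  show "f 0 = 0" using dual_lin(2)[OF f, of 0 0] by simp
qed

lemma dual_cont: "f \<in> dual \<tau> \<Longrightarrow> continuous_map \<tau> euclideanreal f"
  unfolding dual_def by auto

lemma dual_comb:
  assumes "f \<in> dual \<tau>" "g \<in> dual \<tau>"
  shows "(\<lambda>x. a * f x + b * g x) \<in> dual \<tau>"
proof -
  have "linear (\<lambda>x. a * f x + b * g x)"
    by (rule linearI) (simp_all add: dual_lin[OF assms(1)] dual_lin[OF assms(2)] algebra_simps)
  moreover have "continuous_map \<tau> euclideanreal (\<lambda>x. a * f x + b * g x)"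
    by (intro continuous_map_add continuous_map_real_mult_left dual_cont assms)
  ultimately show ?thesis unfolding dual_def by simp
qed

lemma dual_zero: "(\<lambda>x. 0) \<in> dual \<tau>"
proof -
  have "linear (\<lambda>x::'a. 0::real)" by (rule linearI) simp_all
  then show ?thesis unfolding dual_def by simp
qed

lemma dual_lin_cont: "linear g \<Longrightarrow> continuous_map \<tau> euclideanreal g \<Longrightarrow> g \<in> dual \<tau>"
  unfolding dual_def by simp



definition ep :: "('a \<times> ('a \<Rightarrow> real)) \<Rightarrow> ('a \<times> ('a \<Rightarrow> real)) \<Rightarrow> real" where
  "ep p z = snd p (fst z) + snd z (fst p) - snd p (fst p)"

lemma fitz_ep: "fitz T z = (SUP p\<in>T. ereal (ep p z))"
  unfolding fitz_def ep_def by simp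

lemma fitz_le_iff: "fitz T z \<le> ereal r \<longleftrightarrow> (\<forall>p\<in>T. ep p z \<le> r)"
  unfolding fitz_ep by (simp add: SUP_le_iff)

lemma fitz_ge: "p \<in> T \<Longrightarrow> ereal (ep p z) \<le> fitz T z"
  unfolding fitz_ep by (rule SUP_upper)

lemma ep_self: "ep z z = cpl z" unfolding ep_def cpl_def by simp

lemma restr_UNIV: "restr T UNIV = T" unfolding restr_def by simp

lemma Zset_eq: "Zset \<tau> = UNIV \<times> dual \<tau>" unfolding Zset_def ..

lemma topspace_Ztop: "hlcs \<tau> \<Longrightarrow> topspace (Ztop \<tau>) = UNIV \<times> dual \<tau>"
  unfolding Ztop_def weak_star_def by (simp add: topspace_prod_topology hlcs_top)

lemma ep_mono_le:
  assumes mono: "monotone_op T" and TZ: "T \<subseteq> UNIV \<times> dual \<tau>" and z: "z \<in> T" and p: "p \<in> T"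
  shows "ep p z \<le> cpl z"
proof -
  obtain x f where zz: "z = (x,f)" by (cases z)
  obtain u g where pp: "p = (u,g)" by (cases p)
  have f: "f \<in> dual \<tau>" and g: "g \<in> dual \<tau>" using TZ z p zz pp by auto
  have "0 \<le> f (x - u) - g (x - u)" using mono z p zz pp unfolding monotone_op_def by fastforce
  then show ?thesis unfolding ep_def cpl_def zz pp using dual_lin2(1)[OF f] dual_lin2(1)[OF g] by simp
qed

lemma ep_cont:
  assumes "snd p \<in> dual \<tau>"
  shows "continuous_map (Ztop \<tau>) euclideanreal (ep p)"
proof -
  have c1: "continuous_map (Ztop \<tau>) euclideanreal (\<lambda>z. snd p (fst z))"
    using continuous_map_compose[OF continuous_map_fst dual_cont[OF assms]] unfolding Ztop_def o_def .
  have c2: "continuous_map (Ztop \<tau>) euclideanreal (\<lambda>z. snd z (fst p))"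
    using continuous_map_compose[OF continuous_map_snd eval_cont] unfolding Ztop_def o_def .
  have "continuous_map (Ztop \<tau>) euclideanreal (\<lambda>z. snd p (fst z) + snd z (fst p) - snd p (fst p))"
    by (intro continuous_map_diff continuous_map_add c1 c2) simp
  then show ?thesis unfolding ep_def[abs_def] .
qed

lemma forward:
  assumes h: "hlcs \<tau>" and TZ: "T \<subseteq> UNIV \<times> dual \<tau>" and UV: "UNIV \<in> \<V>"
    and M: "T \<in> M_ops \<tau>" and ID: "\<forall>V\<in>\<V>. identifies \<tau> V T"
  shows "representable \<tau> T \<and> (\<forall>V\<in>\<V>. V_NI \<tau> V T)"
proof -
  have mono: "monotone_op T" and Tne: "T \<noteq> {}" using M unfolding M_ops_def by auto
  have NI: "V_NI \<tau> V T" if V: "V \<in> \<V>" for V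
    unfolding V_NI_def
  proof
    fix z assume z: "z \<in> V \<times> dual \<tau>"
    show "ereal (cpl z) \<le> fitz (restr T V) z"
    proof (rule ccontr)
      assume "\<not> ereal (cpl z) \<le> fitz (restr T V) z"
      then have "fitz (restr T V) z \<le> ereal (cpl z)" by simp
      then have "z \<in> T" using ID V z unfolding identifies_def by blast
      then have "z \<in> restr T V" using z unfolding restr_def by auto
      from fitz_ge[OF this, of z] have "ereal (cpl z) \<le> fitz (restr T V) z" by (simp add: ep_self)
      with \<open>\<not> ereal (cpl z) \<le> fitz (restr T V) z\<close> show False by simp
    qed
  qed
  have NIU: "ereal (cpl z) \<le> fitz T z" if "z \<in> Zset \<tau>" for z
    using NI[OF UV] that unfolding V_NI_def restr_UNIV Zset_def by blast
  have IDU0: "{z \<in> UNIV \<times> dual \<tau>. fitz (restr T UNIV) z \<le> ereal (cpl z)} \<subseteq> T"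
    using ID UV unfolding identifies_def by blast
  have IDU: "z \<in> T" if "z \<in> Zset \<tau>" "fitz T z \<le> ereal (cpl z)" for z
    using IDU0 that unfolding restr_UNIV Zset_def by blast
  have onT: "fitz T z \<le> ereal (cpl z)" if "z \<in> T" for z
    unfolding fitz_le_iff using ep_mono_le[OF mono TZ that] by blast
  have "representable \<tau> T"
    unfolding representable_def
  proof (intro exI[of _ "fitz T"] conjI)
    show "proper_Z \<tau> (fitz T)" unfolding proper_Z_def
    proof (intro conjI ballI)
      fix z assume "z \<in> Zset \<tau>"
      then show "fitz T z \<noteq> - \<infinity>" using NIU by (metis MInfty_neq_ereal(1) ereal_infty_less_eq(2))
    next
      obtain z where z: "z \<in> T" using Tne by blast
      then have "fitz T z \<noteq> \<infinity>" using onT[OF z] by auto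
      then show "\<exists>z\<in>Zset \<tau>. fitz T z \<noteq> \<infinity>" using z TZ unfolding Zset_def by blast
    qed
  next
    show "convex_Z \<tau> (fitz T)" unfolding convex_Z_def
    proof (intro ballI allI impI)
      fix z w and r s t :: real assume zw: "z \<in> Zset \<tau>" "w \<in> Zset \<tau>"
        and H: "fitz T z \<le> ereal r \<and> fitz T w \<le> ereal s \<and> 0 \<le> t \<and> t \<le> 1"
      show "fitz T (zcomb t z w) \<le> ereal (t * r + (1 - t) * s)"
        unfolding fitz_le_iff
      proof
        fix p assume p: "p \<in> T"
        have g: "snd p \<in> dual \<tau>" using p TZ by auto
        have "ep p (zcomb t z w) = t * ep p z + (1 - t) * ep p w"
          by (simp only: ep_def zcomb_def fst_conv snd_conv dual_lin[OF g]) (simp add: algebra_simps)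
        moreover have "ep p z \<le> r" "ep p w \<le> s" using H p unfolding fitz_le_iff by auto
        ultimately show "ep p (zcomb t z w) \<le> t * r + (1 - t) * s"
          using H by (simp add: add_mono mult_left_mono)
      qed
    qed
  next
    show "lsc_Z \<tau> (fitz T)" unfolding lsc_Z_def
    proof
      fix r
      have eq: "{z \<in> topspace (Ztop \<tau>). fitz T z \<le> ereal r} = \<Inter> ((\<lambda>p. {z \<in> topspace (Ztop \<tau>). ep p z \<in> {..r}}) ` T)"
        using Tne unfolding fitz_le_iff by auto
      show "closedin (Ztop \<tau>) {z \<in> topspace (Ztop \<tau>). fitz T z \<le> ereal r}"
        unfolding eq
      proof (rule closedin_Inter)
        show "(\<lambda>p. {z \<in> topspace (Ztop \<tau>). ep p z \<in> {..r}}) ` T \<noteq> {}" using Tne by simp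
      next
        fix S assume "S \<in> (\<lambda>p. {z \<in> topspace (Ztop \<tau>). ep p z \<in> {..r}}) ` T"
        then obtain p where p: "p \<in> T" "S = {z \<in> topspace (Ztop \<tau>). ep p z \<in> {..r}}" by blast
        have "snd p \<in> dual \<tau>" using p TZ by auto
        then show "closedin (Ztop \<tau>) S" unfolding p(2)
          by (rule closedin_continuous_map_preimage[OF ep_cont]) (simp add: closed_closedin[symmetric])
      qed
    qed
  next
    show "\<forall>z\<in>Zset \<tau>. ereal (cpl z) \<le> fitz T z" using NIU by blast
  next
    show "{z \<in> Zset \<tau>. fitz T z = ereal (cpl z)} = T"
    proof
      show "{z \<in> Zset \<tau>. fitz T z = ereal (cpl z)} \<subseteq> T" using IDU by auto
      show "T \<subseteq> {z \<in> Zset \<tau>. fitz T z = ereal (cpl z)}"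
      proof
        fix z assume z: "z \<in> T"
        then have zZ: "z \<in> Zset \<tau>" using TZ unfolding Zset_def by blast
        show "z \<in> {z \<in> Zset \<tau>. fitz T z = ereal (cpl z)}" using onT[OF z] NIU[OF zZ] zZ by auto
      qed
    qed
  qed
  then show ?thesis using NI by blast
qed



lemma back_basic:
  assumes h: "hlcs \<tau>" and TZ: "T \<subseteq> UNIV \<times> dual \<tau>" and R: "representable \<tau> T"
    and NIU: "V_NI \<tau> UNIV T"
  shows "T \<in> M_ops \<tau>"
proof -
  obtain hh where hh: "proper_Z \<tau> hh" "convex_Z \<tau> hh" "lsc_Z \<tau> hh" "\<forall>z\<in>Zset \<tau>. ereal (cpl z) \<le> hh z"
    "{z \<in> Zset \<tau>. hh z = ereal (cpl z)} = T"
    using R unfolding representable_def by blast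
  have Tne: "T \<noteq> {}"
  proof
    assume T: "T = {}"
    have "((0::'a), (\<lambda>x::'a. 0::real)) \<in> UNIV \<times> dual \<tau>" using dual_zero by simp
    then have "ereal (cpl ((0::'a), (\<lambda>x::'a. 0::real))) \<le> fitz (restr T UNIV) (0, \<lambda>x. 0)"
      using NIU unfolding V_NI_def by blast
    then show False unfolding T restr_def fitz_def cpl_def by (simp add: bot_ereal_def)
  qed
  have key: "0 \<le> f (x - y) - g (x - y)" if xf: "(x,f) \<in> T" and yg: "(y,g) \<in> T" for x f y g
  proof -
    have f: "f \<in> dual \<tau>" and g: "g \<in> dual \<tau>" using xf yg TZ by auto
    have zZ: "(x,f) \<in> Zset \<tau>" "(y,g) \<in> Zset \<tau>" using f g unfolding Zset_def by auto
    have hz: "hh (x,f) = ereal (f x)" "hh (y,g) = ereal (g y)" using xf yg hh(5) unfolding cpl_def by auto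
    have H: "hh (zcomb t z w) \<le> ereal (t * r + (1 - t) * s)"
      if "z \<in> Zset \<tau>" "w \<in> Zset \<tau>" "hh z \<le> ereal r" "hh w \<le> ereal s" "0 \<le> t" "t \<le> 1" for z w r s t
      using hh(2) that unfolding convex_Z_def by blast
    have "hh (zcomb (1/2) (x,f) (y,g)) \<le> ereal ((1/2) * f x + (1 - 1/2) * g y)"
      by (rule H[OF zZ]) (simp_all add: hz)
    moreover have "zcomb (1/2) (x,f) (y,g) \<in> Zset \<tau>"
      unfolding zcomb_def Zset_def using dual_comb[OF f g, of "1/2" "1 - 1/2"] by simp
    ultimately have "ereal (cpl (zcomb (1/2) (x,f) (y,g))) \<le> ereal ((1/2) * f x + (1 - 1/2) * g y)"
      using hh(4) order_trans by blast
    then have A: "cpl (zcomb (1/2) (x,f) (y,g)) \<le> (1/2) * f x + (1/2) * g y" by simp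
    have "cpl (zcomb (1/2) (x,f) (y,g)) = (1/2) * ((1/2) * f x + (1/2) * f y) + (1/2) * ((1/2) * g x + (1/2) * g y)"
      by (simp only: cpl_def zcomb_def fst_conv snd_conv dual_lin[OF f] dual_lin[OF g]) simp
    with A have "0 \<le> f x - f y - g x + g y" by (simp add: field_simps)
    then show "0 \<le> f (x - y) - g (x - y)" using dual_lin2(1)[OF f] dual_lin2(1)[OF g] by simp
  qed
  have mono: "monotone_op T" unfolding monotone_op_def using key by fast
  show ?thesis unfolding M_ops_def Zset_def using TZ mono Tne by blast
qed

lemma final_step:
  assumes h: "hlcs \<tau>" and TZ: "T \<subseteq> UNIV \<times> dual \<tau>" and V: "alg_open V" and NI: "V_NI \<tau> V T"
    and x0: "x0 \<in> V" and f0: "f0 \<in> dual \<tau>"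
    and mono: "\<And>u us. (u,us) \<in> T \<Longrightarrow> u \<in> V \<Longrightarrow> 0 \<le> us u - us x0 - f0 u + f0 x0"
    and Ys: "Ys \<in> dual \<tau>" and B: "B > 0"
    and sep: "\<And>u us. (u,us) \<in> T \<Longrightarrow> u \<in> V \<Longrightarrow> Ys u - Ys x0 + us Y - f0 Y + B \<le> us u - us x0 - f0 u + f0 x0"
  shows False
proof -
  have "x0 \<in> core V" using V x0 unfolding alg_open_def by simp
  then obtain e where e: "e > 0" "\<And>t. 0 \<le> t \<and> t \<le> e \<Longrightarrow> x0 + t *\<^sub>R Y \<in> V"
    unfolding core_def by blast
  define c2 where "c2 = Ys Y"
  define l where "l = min (min e 1) (B / (2 * (\<bar>c2\<bar> + 1)))"
  have l0: "l > 0" unfolding l_def using e B by simp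
  have l1: "l \<le> 1" "l \<le> e" unfolding l_def by auto
  have lc: "l * \<bar>c2\<bar> < B"
  proof -
    have "l \<le> B / (2 * (\<bar>c2\<bar> + 1))" unfolding l_def by simp
    then have "l * (2 * (\<bar>c2\<bar> + 1)) \<le> B" by (simp add: pos_le_divide_eq)
    moreover have "l * \<bar>c2\<bar> \<le> l * (\<bar>c2\<bar> + 1)" using l0 by simp
    moreover have "0 \<le> l * (\<bar>c2\<bar> + 1)" using l0 by simp
    ultimately show ?thesis using B by linarith
  qed
  define d where "d = l * B + l * l * c2"
  have d0: "d > 0"
  proof -
    have "- \<bar>c2\<bar> \<le> c2" by simp
    then have "l * (- \<bar>c2\<bar>) \<le> l * c2" using l0 by (simp only: mult_left_mono less_imp_le)
    then have "- (l * \<bar>c2\<bar>) \<le> l * c2" by simp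
    then have "B + l * c2 > 0" using lc by linarith
    then have "l * (B + l * c2) > 0" using l0 by simp
    then show ?thesis unfolding d_def by (simp add: algebra_simps)
  qed
  define wx where "wx = x0 + l *\<^sub>R Y"
  define ws where "ws = (\<lambda>x. 1 * f0 x + l * Ys x)"
  have wV: "wx \<in> V" unfolding wx_def using e(2) l0 l1 by simp
  have wd: "ws \<in> dual \<tau>" unfolding ws_def by (rule dual_comb[OF f0 Ys])
  have "ereal (cpl (wx, ws)) \<le> fitz (restr T V) (wx, ws)" using NI wV wd unfolding V_NI_def by blast
  moreover have "fitz (restr T V) (wx, ws) \<le> ereal (cpl (wx, ws) - d)"
    unfolding fitz_le_iff
  proof
    fix p assume p: "p \<in> restr T V"
    obtain u us where pp: "p = (u, us)" by (cases p)
    have uT: "(u,us) \<in> T" and uV: "u \<in> V" using p pp unfolding restr_def by auto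
    have us: "us \<in> dual \<tau>" using uT TZ by auto
    define m where "m = us u - us x0 - f0 u + f0 x0"
    have m0: "0 \<le> m" using mono[OF uT uV] unfolding m_def .
    have s: "Ys u - Ys x0 + us Y - f0 Y + B \<le> m" using sep[OF uT uV] unfolding m_def .
    have ep_eq: "ep p (wx, ws) = us x0 + l * us Y + f0 u + l * Ys u - us u"
      unfolding pp ep_def wx_def ws_def by (simp add: dual_lin[OF us])
    have c_eq: "cpl (wx, ws) = f0 x0 + l * f0 Y + l * Ys x0 + l * l * c2"
      unfolding cpl_def wx_def ws_def c2_def by (simp add: dual_lin[OF f0] dual_lin[OF Ys] algebra_simps)
    have k1: "l * (Ys u - Ys x0 + us Y - f0 Y + B) \<le> l * m" using s l0 by (simp add: mult_left_mono)
    have k2: "0 \<le> (1 - l) * m" using m0 l1 by simp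
    show "ep p (wx, ws) \<le> cpl (wx, ws) - d"
      unfolding ep_eq c_eq d_def using k1 k2 unfolding m_def by (simp add: algebra_simps)
  qed
  ultimately have "ereal (cpl (wx, ws)) \<le> ereal (cpl (wx, ws) - d)" by (rule order_trans)
  then show False using d0 by simp
qed



definition Pm :: "'a set \<Rightarrow> ('a \<Rightarrow> real) \<Rightarrow> ('a \<Rightarrow>\<^sub>0 real)" where
  "Pm K f = Abs_poly_mapping (\<lambda>k. if k \<in> K then f k else 0)"

lemma lookup_Pm: "finite K \<Longrightarrow> Poly_Mapping.lookup (Pm K f) k = (if k \<in> K then f k else 0)"
proof -
  assume K: "finite K"
  have "finite {k. (if k \<in> K then f k else 0) \<noteq> 0}" by (rule finite_subset[OF _ K]) auto
  then show ?thesis unfolding Pm_def by simp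
qed

lemma lookup_scaleR_pm: "Poly_Mapping.lookup (c *\<^sub>R (x :: 'a \<Rightarrow>\<^sub>0 real)) k = c * Poly_Mapping.lookup x k"
proof -
  have "finite {i. c *\<^sub>R Poly_Mapping.lookup x i \<noteq> 0}"
    by (rule finite_subset[OF _ finite_lookup[of x]]) auto
  then show ?thesis unfolding scaleR_poly_mapping_def by simp
qed

lemma Pm_comb: "finite K \<Longrightarrow> Pm K (\<lambda>x. a * f x + b * g x) = a *\<^sub>R Pm K f + b *\<^sub>R Pm K g"
  by (rule poly_mapping_eqI) (simp add: lookup_Pm lookup_add lookup_scaleR_pm)

lemma Pm_sum: "finite K \<Longrightarrow> Pm K f = (\<Sum>k\<in>K. f k *\<^sub>R Poly_Mapping.single k 1)"
proof (rule poly_mapping_eqI)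
  fix i assume K: "finite K"
  have "Poly_Mapping.lookup (\<Sum>k\<in>K. f k *\<^sub>R Poly_Mapping.single k (1::real)) i = (\<Sum>k\<in>K. f k * (1 when k = i))"
    by (simp add: lookup_sum lookup_scaleR_pm lookup_single)
  also have "\<dots> = (\<Sum>k\<in>K. if k = i then f k else 0)"
    by (rule sum.cong) auto
  also have "\<dots> = (if i \<in> K then f i else 0)" using K by (simp add: sum.delta')
  finally show "Poly_Mapping.lookup (Pm K f) i = Poly_Mapping.lookup (\<Sum>k\<in>K. f k *\<^sub>R Poly_Mapping.single k 1) i"
    using K by (simp add: lookup_Pm)
qed

lemma lin_Pm:
  assumes K: "finite K" and l: "linear (ll :: ('a::real_vector \<Rightarrow>\<^sub>0 real) \<Rightarrow> real)" and f: "f \<in> dual \<tau>"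
  shows "ll (Pm K f) = f (\<Sum>k\<in>K. ll (Poly_Mapping.single k 1) *\<^sub>R k)"
proof -
  have fl: "linear f" using f unfolding dual_def by simp
  have "ll (Pm K f) = (\<Sum>k\<in>K. f k * ll (Poly_Mapping.single k 1))"
    unfolding Pm_sum[OF K] by (simp add: linear_sum[OF l] linear_scale[OF l])
  also have "\<dots> = f (\<Sum>k\<in>K. ll (Poly_Mapping.single k 1) *\<^sub>R k)"
    by (simp add: linear_sum[OF fl] linear_scale[OF fl] mult.commute)
  finally show ?thesis .
qed



lemma sum_abs_shift:
  fixes a b :: "'k \<Rightarrow> real"
  assumes "0 \<le> t"
  shows "(\<Sum>k\<in>K. \<bar>a k + t * b k\<bar>) \<le> (\<Sum>k\<in>K. \<bar>a k\<bar>) + t * (\<Sum>k\<in>K. \<bar>b k\<bar>)"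
proof -
  have "(\<Sum>k\<in>K. \<bar>a k + t * b k\<bar>) \<le> (\<Sum>k\<in>K. \<bar>a k\<bar> + t * \<bar>b k\<bar>)"
  proof (rule sum_mono)
    fix k
    have "\<bar>a k + t * b k\<bar> \<le> \<bar>a k\<bar> + \<bar>t * b k\<bar>" by (rule abs_triangle_ineq)
    then show "\<bar>a k + t * b k\<bar> \<le> \<bar>a k\<bar> + t * \<bar>b k\<bar>" using assms by (simp add: abs_mult)
  qed
  also have "\<dots> = (\<Sum>k\<in>K. \<bar>a k\<bar>) + t * (\<Sum>k\<in>K. \<bar>b k\<bar>)" by (simp add: sum.distrib sum_distrib_left)
  finally show ?thesis .
qed

lemma sum_abs_comb:
  fixes a b :: "'k \<Rightarrow> real"
  assumes "0 \<le> u" "0 \<le> w"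
  shows "(\<Sum>k\<in>K. \<bar>u * a k + w * b k\<bar>) \<le> u * (\<Sum>k\<in>K. \<bar>a k\<bar>) + w * (\<Sum>k\<in>K. \<bar>b k\<bar>)"
proof -
  have "(\<Sum>k\<in>K. \<bar>u * a k + w * b k\<bar>) \<le> (\<Sum>k\<in>K. u * \<bar>a k\<bar> + w * \<bar>b k\<bar>)"
  proof (rule sum_mono)
    fix k
    have "\<bar>u * a k + w * b k\<bar> \<le> \<bar>u * a k\<bar> + \<bar>w * b k\<bar>" by (rule abs_triangle_ineq)
    then show "\<bar>u * a k + w * b k\<bar> \<le> u * \<bar>a k\<bar> + w * \<bar>b k\<bar>" using assms by (simp add: abs_mult)
  qed
  also have "\<dots> = u * (\<Sum>k\<in>K. \<bar>a k\<bar>) + w * (\<Sum>k\<in>K. \<bar>b k\<bar>)" by (simp add: sum.distrib sum_distrib_left)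
  finally show ?thesis .
qed

lemma sep_claim:
  fixes \<tau> :: "'a::real_vector topology"
  assumes h: "hlcs \<tau>" and TZ: "T \<subseteq> UNIV \<times> dual \<tau>"
    and pr: "proper_Z \<tau> hh" and cv: "convex_Z \<tau> hh" and ls: "lsc_Z \<tau> hh"
    and hT: "{z \<in> Zset \<tau>. hh z = ereal (cpl z)} = T"
    and f0: "f0 \<in> dual \<tau>" and hz0: "ereal (f0 x0) < hh (x0, f0)"
    and mono: "\<And>u us. (u,us) \<in> T \<Longrightarrow> u \<in> V \<Longrightarrow> 0 \<le> us u - us x0 - f0 u + f0 x0"
  shows "\<exists>Ys Y B. Ys \<in> dual \<tau> \<and> B > 0 \<and> (\<forall>u us. (u,us) \<in> T \<longrightarrow> u \<in> V \<longrightarrow>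
            Ys u - Ys x0 + us Y - f0 Y + B \<le> us u - us x0 - f0 u + f0 x0)"
proof -
  obtain r where r: "ereal (f0 x0) < ereal r" "ereal r < hh (x0,f0)" using ereal_dense2[OF hz0] by blast
  define r1 where "r1 = (f0 x0 + r)/2"
  have r1: "f0 x0 < r1" "r1 < r" using r(1) unfolding r1_def by auto
  have top: "topspace (Ztop \<tau>) = UNIV \<times> dual \<tau>" by (rule topspace_Ztop[OF h])
  have cl: "closedin (Ztop \<tau>) {z \<in> topspace (Ztop \<tau>). hh z \<le> ereal r}" using ls unfolding lsc_Z_def by blast
  have op: "openin (Ztop \<tau>) (topspace (Ztop \<tau>) - {z \<in> topspace (Ztop \<tau>). hh z \<le> ereal r})"
    using cl by (rule openin_diff[OF openin_topspace])
  have z0in: "(x0, f0) \<in> topspace (Ztop \<tau>) - {z \<in> topspace (Ztop \<tau>). hh z \<le> ereal r}"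
    using f0 r(2) top by auto
  define S where "S = topspace (Ztop \<tau>) - {z \<in> topspace (Ztop \<tau>). hh z \<le> ereal r}"
  have op2: "openin (prod_topology \<tau> (weak_star \<tau>)) S" using op unfolding S_def Ztop_def .
  have z0S: "(x0, f0) \<in> S" using z0in unfolding S_def .
  obtain U1 W1 where UW: "openin \<tau> U1" "openin (weak_star \<tau>) W1" "x0 \<in> U1" "f0 \<in> W1"
      "U1 \<times> W1 \<subseteq> S"
    using op2[unfolded openin_prod_topology_alt, rule_format, OF z0S] by blast
  have big: "ereal r < hh (x, f)" if "x \<in> U1" "f \<in> W1" for x f
    using UW(5) that unfolding S_def by auto
  obtain K \<epsilon> where Ke: "finite K" "\<epsilon> > 0" "\<And>f. f \<in> dual \<tau> \<Longrightarrow> (\<Sum>k\<in>K. \<bar>f k - f0 k\<bar>) < \<epsilon> \<Longrightarrow> f \<in> W1"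
    using weak_nbhd[OF UW(2,4)] by blast
  have U1': "openin \<tau> {y. 1 *\<^sub>R (y + x0) \<in> U1}"
    by (rule open_preimage[OF cont_affine[OF h] UW(1)]) (simp add: hlcs_top[OF h])
  have U10: "0 \<in> {y. 1 *\<^sub>R (y + x0) \<in> U1}" using UW(3) by simp
  have lc: "\<forall>U. openin \<tau> U \<and> 0 \<in> U \<longrightarrow> (\<exists>W. openin \<tau> W \<and> convex W \<and> 0 \<in> W \<and> W \<subseteq> U)"
    using h unfolding hlcs_def by blast
  obtain U where U: "openin \<tau> U" "convex U" "0 \<in> U" "U \<subseteq> {y. 1 *\<^sub>R (y + x0) \<in> U1}"
    using lc U1' U10 by blast
  have near: "ereal r < hh (x0 + y, f)" if "y \<in> U" "f \<in> dual \<tau>" "(\<Sum>k\<in>K. \<bar>f k - f0 k\<bar>) < \<epsilon>" for y f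
  proof -
    have "x0 + y \<in> U1" using U(4) that(1) by (auto simp: add.commute)
    moreover have "f \<in> W1" using Ke(3) that(2,3) .
    ultimately show ?thesis by (rule big)
  qed
  define P where "P = Pm K"
  have lP: "Poly_Mapping.lookup (P f) k = (if k \<in> K then f k else 0)" for f k
    unfolding P_def by (rule lookup_Pm[OF Ke(1)])
  have sumP: "(\<Sum>k\<in>K. \<bar>Poly_Mapping.lookup (P f) k - f0 k\<bar>) = (\<Sum>k\<in>K. \<bar>f k - f0 k\<bar>)" for f
    by (rule sum.cong) (simp_all add: lP)
  define A :: "('a \<times> (('a \<Rightarrow>\<^sub>0 real) \<times> real)) set" where
    "A = {(y, (v, s)) | y v s. y \<in> U \<and> (\<Sum>k\<in>K. \<bar>Poly_Mapping.lookup v k - f0 k\<bar>) < \<epsilon> \<and> s < r}"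
  define D :: "('a \<times> (('a \<Rightarrow>\<^sub>0 real) \<times> real)) set" where
    "D = {(y, (P f, s)) | y f s. f \<in> dual \<tau> \<and> hh (x0 + y, f) \<le> ereal s}"
  have inA: "(y, (v, s)) \<in> A \<longleftrightarrow> y \<in> U \<and> (\<Sum>k\<in>K. \<bar>Poly_Mapping.lookup v k - f0 k\<bar>) < \<epsilon> \<and> s < r" for y v s
    unfolding A_def by blast
  have inD: "(y, (P f, s)) \<in> D" if "f \<in> dual \<tau>" "hh (x0 + y, f) \<le> ereal s" for y f s
    unfolding D_def using that by blast
  have cA: "convex A"
  proof (rule convexI)
    fix a b :: "'a \<times> (('a \<Rightarrow>\<^sub>0 real) \<times> real)" and u w :: real
    assume ab: "a \<in> A" "b \<in> A" and uw: "0 \<le> u" "0 \<le> w" "u + w = 1"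
    obtain y1 v1 s1 where a: "a = (y1,(v1,s1))" by (cases a) auto
    obtain y2 v2 s2 where b: "b = (y2,(v2,s2))" by (cases b) auto
    have h1: "y1 \<in> U" "(\<Sum>k\<in>K. \<bar>Poly_Mapping.lookup v1 k - f0 k\<bar>) < \<epsilon>" "s1 < r"
      using ab(1) unfolding a inA by auto
    have h2: "y2 \<in> U" "(\<Sum>k\<in>K. \<bar>Poly_Mapping.lookup v2 k - f0 k\<bar>) < \<epsilon>" "s2 < r"
      using ab(2) unfolding b inA by auto
    have y: "u *\<^sub>R y1 + w *\<^sub>R y2 \<in> U" using convexD[OF U(2) h1(1) h2(1) uw] .
    have "(\<Sum>k\<in>K. \<bar>Poly_Mapping.lookup (u *\<^sub>R v1 + w *\<^sub>R v2) k - f0 k\<bar>)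
        = (\<Sum>k\<in>K. \<bar>u * (Poly_Mapping.lookup v1 k - f0 k) + w * (Poly_Mapping.lookup v2 k - f0 k)\<bar>)"
    proof (rule sum.cong)
      fix k
      have "f0 k = u * f0 k + w * f0 k" using uw(3) by (metis distrib_right mult_1)
      then show "\<bar>Poly_Mapping.lookup (u *\<^sub>R v1 + w *\<^sub>R v2) k - f0 k\<bar>
        = \<bar>u * (Poly_Mapping.lookup v1 k - f0 k) + w * (Poly_Mapping.lookup v2 k - f0 k)\<bar>"
        by (simp add: lookup_add lookup_scaleR_pm algebra_simps)
    qed simp
    also have "\<dots> \<le> u * (\<Sum>k\<in>K. \<bar>Poly_Mapping.lookup v1 k - f0 k\<bar>) + w * (\<Sum>k\<in>K. \<bar>Poly_Mapping.lookup v2 k - f0 k\<bar>)"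
      by (rule sum_abs_comb[OF uw(1,2)])
    also have "\<dots> < \<epsilon>" by (rule convex_bound_lt[OF h1(2) h2(2) uw])
    finally have v: "(\<Sum>k\<in>K. \<bar>Poly_Mapping.lookup (u *\<^sub>R v1 + w *\<^sub>R v2) k - f0 k\<bar>) < \<epsilon>" .
    have s: "u * s1 + w * s2 < r" by (rule convex_bound_lt[OF h1(3) h2(3) uw])
    have "u *\<^sub>R a + w *\<^sub>R b = (u *\<^sub>R y1 + w *\<^sub>R y2, (u *\<^sub>R v1 + w *\<^sub>R v2, u * s1 + w * s2))"
      unfolding a b by simp
    then show "u *\<^sub>R a + w *\<^sub>R b \<in> A" using y v s inA by simp
  qed
  have cD: "convex D"
  proof (rule convexI)
    fix a b :: "'a \<times> (('a \<Rightarrow>\<^sub>0 real) \<times> real)" and u w :: real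
    assume ab: "a \<in> D" "b \<in> D" and uw: "0 \<le> u" "0 \<le> w" "u + w = 1"
    obtain y1 f1 s1 where a: "a = (y1,(P f1,s1))" "f1 \<in> dual \<tau>" "hh (x0 + y1, f1) \<le> ereal s1"
      using ab(1) unfolding D_def by blast
    obtain y2 f2 s2 where b: "b = (y2,(P f2,s2))" "f2 \<in> dual \<tau>" "hh (x0 + y2, f2) \<le> ereal s2"
      using ab(2) unfolding D_def by blast
    define f where "f = (\<lambda>x. u * f1 x + w * f2 x)"
    have fd: "f \<in> dual \<tau>" unfolding f_def by (rule dual_comb[OF a(2) b(2)])
    have w1: "w = 1 - u" using uw(3) by simp
    have zc: "zcomb u (x0 + y1, f1) (x0 + y2, f2) = (x0 + (u *\<^sub>R y1 + w *\<^sub>R y2), f)"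
    proof -
      have "u *\<^sub>R (x0 + y1) + (1 - u) *\<^sub>R (x0 + y2) = (u + (1 - u)) *\<^sub>R x0 + (u *\<^sub>R y1 + (1 - u) *\<^sub>R y2)"
        by (simp only: scaleR_add_right scaleR_add_left) (simp add: algebra_simps)
      then show ?thesis unfolding zcomb_def f_def w1 by simp
    qed
    have H: "hh (zcomb t z z') \<le> ereal (t * r' + (1 - t) * s')"
      if "z \<in> Zset \<tau>" "z' \<in> Zset \<tau>" "hh z \<le> ereal r'" "hh z' \<le> ereal s'" "0 \<le> t" "t \<le> 1" for z z' r' s' t
      using cv that unfolding convex_Z_def by blast
    have "hh (zcomb u (x0 + y1, f1) (x0 + y2, f2)) \<le> ereal (u * s1 + (1 - u) * s2)"
      by (rule H) (use a b uw in \<open>auto simp: Zset_def\<close>)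
    then have hf: "hh (x0 + (u *\<^sub>R y1 + w *\<^sub>R y2), f) \<le> ereal (u * s1 + w * s2)"
      unfolding zc w1 .
    have Pf: "P f = u *\<^sub>R P f1 + w *\<^sub>R P f2" unfolding P_def f_def by (rule Pm_comb[OF Ke(1)])
    have "u *\<^sub>R a + w *\<^sub>R b = (u *\<^sub>R y1 + w *\<^sub>R y2, (P f, u * s1 + w * s2))"
      unfolding a(1) b(1) Pf by simp
    then show "u *\<^sub>R a + w *\<^sub>R b \<in> D" using inD[OF fd hf] by simp
  qed
  have a00: "(y, (P f0, s)) \<in> A" if "y \<in> U" "s < r" for y s
    unfolding inA using Ke(2) that sumP[of f0] by simp
  have An: "A \<noteq> {}" using a00[OF U(3), of "r - 1"] by auto
  have Dn: "D \<noteq> {}"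
  proof -
    obtain z where z: "z \<in> Zset \<tau>" "hh z \<noteq> \<infinity>" using pr unfolding proper_Z_def by blast
    have "hh z \<noteq> -\<infinity>" using pr z(1) unfolding proper_Z_def by blast
    then obtain s where s: "hh z = ereal s" using z(2) by (cases "hh z") auto
    obtain x f where zz: "z = (x,f)" by (cases z)
    have "f \<in> dual \<tau>" using z(1) zz unfolding Zset_def by auto
    moreover have "hh (x0 + (x - x0), f) \<le> ereal s" using s zz by simp
    ultimately show ?thesis using inD by blast
  qed
  have disj: "A \<inter> D = {}"
  proof (rule ccontr)
    assume "A \<inter> D \<noteq> {}"
    then obtain y f s where d: "(y, (P f, s)) \<in> A" "f \<in> dual \<tau>" "hh (x0 + y, f) \<le> ereal s"
      unfolding D_def by blast
    have "y \<in> U" "(\<Sum>k\<in>K. \<bar>f k - f0 k\<bar>) < \<epsilon>" "s < r" using d(1) unfolding inA sumP by auto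
    then have "ereal r < hh (x0 + y, f)" using near d(2) by blast
    then show False using d(3) \<open>s < r\<close> by (metis ereal_less_eq(3) less_le_not_le order.strict_trans1)
  qed
  have aA: "aopen A" unfolding aopen_def
  proof (intro ballI allI)
    fix a and dd :: "'a \<times> (('a \<Rightarrow>\<^sub>0 real) \<times> real)" assume a: "a \<in> A"
    obtain y v s where aa: "a = (y,(v,s))" by (cases a) auto
    obtain dy dv ds where ddd: "dd = (dy,(dv,ds))" by (cases dd) auto
    define S0 where "S0 = (\<Sum>k\<in>K. \<bar>Poly_Mapping.lookup v k - f0 k\<bar>)"
    define Sd where "Sd = (\<Sum>k\<in>K. \<bar>Poly_Mapping.lookup dv k\<bar>)"
    have h1: "y \<in> U" "S0 < \<epsilon>" "s < r" using a unfolding aa inA S0_def by auto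
    obtain e1 where e1: "e1 > 0" "\<And>t. 0 \<le> t \<and> t \<le> e1 \<Longrightarrow> y + t *\<^sub>R dy \<in> U"
      using open_alg[OF h U(1) h1(1)] by blast
    have Sd0: "0 \<le> Sd" unfolding Sd_def by (rule sum_nonneg) simp
    define e2 where "e2 = (\<epsilon> - S0) / (Sd + 1)"
    define e3 where "e3 = (r - s) / (\<bar>ds\<bar> + 1)"
    have e2: "e2 > 0" "e2 * Sd < \<epsilon> - S0"
    proof -
      show "e2 > 0" unfolding e2_def using h1(2) Sd0 by simp
      have "e2 * (Sd + 1) = \<epsilon> - S0" unfolding e2_def using Sd0 by simp
      then show "e2 * Sd < \<epsilon> - S0" using \<open>e2 > 0\<close> by (simp add: algebra_simps)
    qed
    have e3: "e3 > 0" "e3 * \<bar>ds\<bar> < r - s"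
    proof -
      show "e3 > 0" unfolding e3_def using h1(3) by simp
      have "e3 * (\<bar>ds\<bar> + 1) = r - s" unfolding e3_def by (simp add: add_pos_nonneg)
      then show "e3 * \<bar>ds\<bar> < r - s" using \<open>e3 > 0\<close> by (simp add: algebra_simps)
    qed
    define e where "e = min e1 (min e2 e3)"
    have "a + t *\<^sub>R dd \<in> A" if t: "0 \<le> t" "t \<le> e" for t
    proof -
      have ty: "y + t *\<^sub>R dy \<in> U" using e1(2) t unfolding e_def by simp
      have "(\<Sum>k\<in>K. \<bar>Poly_Mapping.lookup (v + t *\<^sub>R dv) k - f0 k\<bar>)
          = (\<Sum>k\<in>K. \<bar>(Poly_Mapping.lookup v k - f0 k) + t * Poly_Mapping.lookup dv k\<bar>)"
        by (rule sum.cong) (simp_all add: lookup_add lookup_scaleR_pm algebra_simps)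
      also have "\<dots> \<le> S0 + t * Sd" unfolding S0_def Sd_def by (rule sum_abs_shift[OF t(1)])
      also have "t * Sd \<le> e2 * Sd" using t Sd0 unfolding e_def by (simp add: mult_right_mono)
      finally have tv: "(\<Sum>k\<in>K. \<bar>Poly_Mapping.lookup (v + t *\<^sub>R dv) k - f0 k\<bar>) < \<epsilon>"
        using e2(2) by simp
      have "t * ds \<le> t * \<bar>ds\<bar>" using t(1) by (simp add: mult_left_mono)
      also have "\<dots> \<le> e3 * \<bar>ds\<bar>" using t unfolding e_def by (simp add: mult_right_mono)
      finally have ts: "s + t * ds < r" using e3(2) by simp
      have "a + t *\<^sub>R dd = (y + t *\<^sub>R dy, (v + t *\<^sub>R dv, s + t * ds))" unfolding aa ddd by simp
      then show ?thesis using ty tv ts inA by simp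
    qed
    moreover have "e > 0" unfolding e_def using e1(1) e2(1) e3(1) by simp
    ultimately show "\<exists>e>0. \<forall>t. 0 \<le> t \<and> t \<le> e \<longrightarrow> a + t *\<^sub>R dd \<in> A" by blast
  qed
  obtain F :: "'a \<times> (('a \<Rightarrow>\<^sub>0 real) \<times> real) \<Rightarrow> real" where
    F: "linear F" "\<And>a d. a\<in>A \<Longrightarrow> d\<in>D \<Longrightarrow> F a < F d" "\<And>a. a\<in>A \<Longrightarrow> \<exists>a'\<in>A. F a < F a'"
    using separation[OF cA cD An Dn disj aA] by blast
  have Fl: "\<And>x y. F (x + y) = F x + F y" "\<And>c x. F (c *\<^sub>R x) = c * F x"
    using F(1) unfolding linear_iff by auto
  define g where "g y = F (y, (0, 0))" for y
  define ll where "ll v = F (0, (v, 0))" for v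
  define \<alpha> where "\<alpha> = F (0, (0, 1))"
  have Fdec: "F (y, (v, s)) = g y + ll v + \<alpha> * s" for y v s
  proof -
    have "F (y, (v, s)) = F ((y, (0,0)) + (0, (v, 0)) + s *\<^sub>R (0, (0, 1)))" by simp
    also have "\<dots> = F (y, (0,0)) + F (0, (v, 0)) + s * F (0, (0, 1))" by (simp only: Fl)
    finally show ?thesis unfolding g_def ll_def \<alpha>_def by (simp add: mult.commute)
  qed
  have gl: "linear g"
  proof (rule linearI)
    fix y1 y2 :: 'a
    have "(y1 + y2, (0::'a \<Rightarrow>\<^sub>0 real, 0::real)) = (y1, (0, 0)) + (y2, (0, 0))" by simp
    then show "g (y1 + y2) = g y1 + g y2" unfolding g_def using Fl(1) by metis
  next
    fix c :: real and y :: 'a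
    have "(c *\<^sub>R y, (0::'a \<Rightarrow>\<^sub>0 real, 0::real)) = c *\<^sub>R (y, (0, 0))" by simp
    then show "g (c *\<^sub>R y) = c *\<^sub>R g y" unfolding g_def real_scaleR_def using Fl(2) by metis
  qed
  have lll: "linear ll"
  proof (rule linearI)
    fix y1 y2 :: "'a \<Rightarrow>\<^sub>0 real"
    have "(0::'a, (y1 + y2, 0::real)) = (0, (y1, 0)) + (0, (y2, 0))" by simp
    then show "ll (y1 + y2) = ll y1 + ll y2" unfolding ll_def using Fl(1) by metis
  next
    fix c :: real and y :: "'a \<Rightarrow>\<^sub>0 real"
    have "(0::'a, (c *\<^sub>R y, 0::real)) = c *\<^sub>R (0, (y, 0))" by simp
    then show "ll (c *\<^sub>R y) = c *\<^sub>R ll y" unfolding ll_def real_scaleR_def using Fl(2) by metis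
  qed
  have g0: "g 0 = 0" using linear_0[OF gl] .
  have gdiff: "g (a - b) = g a - g b" for a b using linear_diff[OF gl] .
  define yv where "yv = (\<Sum>k\<in>K. ll (Poly_Mapping.single k 1) *\<^sub>R k)"
  have llP: "ll (P f) = f yv" if "f \<in> dual \<tau>" for f
    unfolding P_def yv_def by (rule lin_Pm[OF Ke(1) lll that])
  obtain d0 where d0: "d0 \<in> D" using Dn by blast
  have al0: "0 \<le> \<alpha>"
  proof (rule ccontr)
    assume "\<not> 0 \<le> \<alpha>"
    then have al: "\<alpha> < 0" by simp
    define s where "s = min (r - 1) ((F d0 - ll (P f0)) / \<alpha>)"
    have "(0, (P f0, s)) \<in> A" using a00[OF U(3)] unfolding s_def by simp
    then have "F (0, (P f0, s)) < F d0" using F(2) d0 by blast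
    then have lt: "ll (P f0) + \<alpha> * s < F d0" using Fdec g0 by simp
    have "s \<le> (F d0 - ll (P f0)) / \<alpha>" unfolding s_def by simp
    from mult_left_mono_neg[OF this, of \<alpha>] al
    have "\<alpha> * ((F d0 - ll (P f0)) / \<alpha>) \<le> \<alpha> * s" by simp
    moreover have "\<alpha> * ((F d0 - ll (P f0)) / \<alpha>) = F d0 - ll (P f0)" using al by simp
    ultimately have "F d0 - ll (P f0) \<le> \<alpha> * s" by simp
    then show False using lt by simp
  qed
  have gb: "g y \<le> F d0 - ll (P f0) - \<alpha> * (r - 1)" if "y \<in> U" for y
  proof -
    have "F (y, (P f0, r - 1)) < F d0" using F(2)[OF a00[OF that, of "r - 1"] d0] by simp
    then show ?thesis using Fdec by simp
  qed
  have gd: "g \<in> dual \<tau>" by (rule dual_lin_cont[OF gl lin_bdd_cont[OF h gl U(1) U(3) gb]])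
  have Tp: "us \<in> dual \<tau>" "hh (u, us) = ereal (us u)" if "(u, us) \<in> T" for u us
    using that TZ hT unfolding cpl_def by auto
  have Fdp: "g u - g x0 + us yv + \<alpha> * us u > F a" if "(u, us) \<in> T" "a \<in> A" for u us a
  proof -
    have "(u - x0, (P us, us u)) \<in> D" by (rule inD) (use Tp[OF that(1)] in simp_all)
    from F(2)[OF that(2) this] show ?thesis using Fdec gdiff llP[OF Tp(1)[OF that(1)]] by simp
  qed
  show ?thesis
  proof (cases "\<alpha> = 0")
    case True
    obtain a1 where a1: "a1 \<in> A" "F (0, (P f0, r - 1)) < F a1" using F(3)[OF a00[OF U(3), of "r - 1"]] by auto
    define B where "B = F a1 - F (0, (P f0, r - 1))"
    have B0: "B > 0" using a1 unfolding B_def by simp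
    have Fa0: "F (0, (P f0, r - 1)) = f0 yv" using Fdec g0 llP[OF f0] True by simp
    define Ys where "Ys = (\<lambda>x. (-1) * g x + 0 * f0 x)"
    have Ysd: "Ys \<in> dual \<tau>" unfolding Ys_def by (rule dual_comb[OF gd f0])
    have "Ys u - Ys x0 + us ((-1) *\<^sub>R yv) - f0 ((-1) *\<^sub>R yv) + B \<le> us u - us x0 - f0 u + f0 x0"
      if "(u, us) \<in> T" "u \<in> V" for u us
    proof -
      have "g u - g x0 + us yv + \<alpha> * us u > F a1" by (rule Fdp[OF that(1) a1(1)])
      moreover have "us ((-1) *\<^sub>R yv) = - us yv" "f0 ((-1) *\<^sub>R yv) = - f0 yv"
        using dual_lin2(2)[OF Tp(1)[OF that(1)]] dual_lin2(2)[OF f0] by auto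
      moreover have "0 \<le> us u - us x0 - f0 u + f0 x0" by (rule mono[OF that])
      ultimately show ?thesis unfolding Ys_def B_def using True Fa0 by simp
    qed
    then show ?thesis using Ysd B0 by blast
  next
    case False
    then have al: "\<alpha> > 0" using al0 by simp
    define Ys where "Ys = (\<lambda>x. (- (1/\<alpha>)) * g x + (-1) * f0 x)"
    have Ysd: "Ys \<in> dual \<tau>" unfolding Ys_def by (rule dual_comb[OF gd f0])
    define Y where "Y = (- (1/\<alpha>)) *\<^sub>R yv - x0"
    define B where "B = r1 - f0 x0"
    have B0: "B > 0" using r1 unfolding B_def by simp
    have "Ys u - Ys x0 + us Y - f0 Y + B \<le> us u - us x0 - f0 u + f0 x0"
      if "(u, us) \<in> T" "u \<in> V" for u us
    proof -
      have us: "us \<in> dual \<tau>" by (rule Tp(1)[OF that(1)])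
      have "F (0, (P f0, r1)) < g u - g x0 + us yv + \<alpha> * us u" by (rule Fdp[OF that(1) a00[OF U(3) r1(2)]])
      then have ineq: "f0 yv + \<alpha> * r1 < g u - g x0 + us yv + \<alpha> * us u" using Fdec g0 llP[OF f0] by simp
      define G where "G = g u - g x0 + us yv - f0 yv"
      have "\<alpha> * (r1 - us u) < G" using ineq unfolding G_def by (simp add: algebra_simps)
      then have G1: "r1 - us u < G / \<alpha>" using al by (simp add: pos_less_divide_eq mult.commute)
      have e1: "us Y = - (1/\<alpha>) * us yv - us x0" unfolding Y_def using dual_lin[OF us] dual_lin2[OF us] by simp
      have e2: "f0 Y = - (1/\<alpha>) * f0 yv - f0 x0" unfolding Y_def using dual_lin[OF f0] dual_lin2[OF f0] by simp
      have e3: "Ys u - Ys x0 = - (1/\<alpha>) * (g u - g x0) - f0 u + f0 x0" unfolding Ys_def by (simp add: algebra_simps)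
      have e4: "G / \<alpha> = (1/\<alpha>) * (g u - g x0) + (1/\<alpha>) * us yv - (1/\<alpha>) * f0 yv"
        unfolding G_def by (simp add: diff_divide_distrib add_divide_distrib)
      show ?thesis using G1 e1 e2 e3 e4 unfolding B_def by linarith
    qed
    then show ?thesis using Ysd B0 by blast
  qed
qed


theorem theorem3p3:
  fixes \<tau> :: "'a::real_vector topology"
    and T :: "('a \<times> ('a \<Rightarrow> real)) set"
    and \<V> :: "'a set set"
  assumes "hlcs \<tau>"
    and "T \<subseteq> UNIV \<times> dual \<tau>"
    and "\<forall>V\<in>\<V>. alg_open V"
    and "UNIV \<in> \<V>"
  shows "(T \<in> M_ops \<tau> \<and> (\<forall>V\<in>\<V>. identifies \<tau> V T))
     \<longleftrightarrow> (representable \<tau> T \<and> (\<forall>V\<in>\<V>. V_NI \<tau> V T))"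
proof
  assume "T \<in> M_ops \<tau> \<and> (\<forall>V\<in>\<V>. identifies \<tau> V T)"
  then show "representable \<tau> T \<and> (\<forall>V\<in>\<V>. V_NI \<tau> V T)"
    using forward[OF assms(1,2,4)] by blast
next
  assume RN: "representable \<tau> T \<and> (\<forall>V\<in>\<V>. V_NI \<tau> V T)"
  then have R: "representable \<tau> T" and NI: "\<And>V. V \<in> \<V> \<Longrightarrow> V_NI \<tau> V T" by auto
  have M: "T \<in> M_ops \<tau>" by (rule back_basic[OF assms(1,2) R NI[OF assms(4)]])
  obtain hh where hh: "proper_Z \<tau> hh" "convex_Z \<tau> hh" "lsc_Z \<tau> hh" "\<forall>z\<in>Zset \<tau>. ereal (cpl z) \<le> hh z"
    "{z \<in> Zset \<tau>. hh z = ereal (cpl z)} = T"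
    using R unfolding representable_def by blast
  have "identifies \<tau> V T" if V: "V \<in> \<V>" for V
    unfolding identifies_def
  proof
    fix z assume z: "z \<in> {z \<in> V \<times> dual \<tau>. fitz (restr T V) z \<le> ereal (cpl z)}"
    obtain x0 f0 where zz: "z = (x0, f0)" by (cases z)
    have x0: "x0 \<in> V" and f0: "f0 \<in> dual \<tau>" and fz: "fitz (restr T V) (x0, f0) \<le> ereal (f0 x0)"
      using z zz unfolding cpl_def by auto
    show "z \<in> T"
    proof (rule ccontr)
      assume nT: "z \<notin> T"
      have zZ: "(x0, f0) \<in> Zset \<tau>" using f0 unfolding Zset_def by simp
      have "hh (x0, f0) \<noteq> ereal (f0 x0)" using nT zz hh(5) zZ unfolding cpl_def by auto
      moreover have "ereal (f0 x0) \<le> hh (x0, f0)" using hh(4) zZ unfolding cpl_def by auto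
      ultimately have hz0: "ereal (f0 x0) < hh (x0, f0)" by simp
      have mono: "0 \<le> us u - us x0 - f0 u + f0 x0" if "(u,us) \<in> T" "u \<in> V" for u us
      proof -
        have "(u, us) \<in> restr T V" using that unfolding restr_def by auto
        then have "ep (u, us) (x0, f0) \<le> f0 x0" using fz unfolding fitz_le_iff by blast
        then show ?thesis unfolding ep_def by simp
      qed
      obtain Ys Y B where S: "Ys \<in> dual \<tau>" "B > 0"
        "\<And>u us. (u,us) \<in> T \<Longrightarrow> u \<in> V \<Longrightarrow> Ys u - Ys x0 + us Y - f0 Y + B \<le> us u - us x0 - f0 u + f0 x0"
        using sep_claim[OF assms(1,2) hh(1,2,3,5) f0 hz0 mono] by blast
      show False
        by (rule final_step[OF assms(1,2) _ NI[OF V] x0 f0 mono S(1,2) S(3)]) (use assms(3) V in blast)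
    qed
  qed
  then show "T \<in> M_ops \<tau> \<and> (\<forall>V\<in>\<V>. identifies \<tau> V T)" using M by blast
qed

end
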